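(* Let $\mathcal{H}=\mathbb{R}\times\mathbb{R}\times\,]0,+\infty[$. The map associating to an irreducible planar Keplerian branch around ${\rm O}$ the parameters $(\alpha,\beta,\gamma)$ of its unifocal equation $r=\alpha x+\beta y+\gamma$ is a bijection from the space of irreducible planar Keplerian branches around ${\rm O}$ onto $\mathcal{H}$. Under this bijection: the set of irreducible Keplerian branches passing through a point ${\rm A}\neq{\rm O}$ is the intersection with $\mathcal{H}$ of a plane which cuts the boundary $\{\gamma=0\}$ of $\mathcal{H}$; the set of irreducible Keplerian branches passing through two points ${\rm A}$ and ${\rm B}$ not located on the same ray from ${\rm O}$ is the intersection with $\mathcal{H}$ of a straight line; this line cuts the boundary of $\mathcal{H}$, except if ${\rm O}$ lies on the open segment $]{\rm A},{\rm B}[$, in which case the line is contained in $\mathcal{H}$ and $\gamma$ is constant on the line.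
   Context: Work in the Euclidean plane $\mathbb{R}^2={\rm O}xy$ with origin ${\rm O}$, $r=\sqrt{x^2+y^2}$, and Newton's system $\ddot q=-q/r^3$. An extended solution is a continuous path $t\mapsto q(t)$ which is an analytic solution except at a discrete set of collision times where $q={\rm O}$, at which the motion bounces back along the same ray with the same energy; a Keplerian branch around ${\rm O}$ is the image of an extended solution. A branch is irreducible if it is not contained in a line (i.e. it is not rectilinear). For a nonrectilinear solution $q=(x,y)$, with $C=x\dot y-y\dot x$, $\alpha=\frac{x}{r}-\dot yC$, $\beta=\frac{y}{r}+\dot xC$ (constants of motion) and $\gamma=C^2>0$, the branch is exactly the set of points satisfying $r=\alpha x+\beta y+\gamma$, called its unifocal equation. A ray is a closed half-line from ${\rm O}$. *)

theory Defs
  imports "HOL-Analysis.Analysis"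
begin

text \<open>Points of the plane are pairs (x,y); the origin O is 0.
  norm (x,y) = sqrt (x^2 + y^2) = r.\<close>

definition kep_energy :: "real \<times> real \<Rightarrow> real \<times> real \<Rightarrow> real" where
  "kep_energy p w = (norm w)\<^sup>2 / 2 - 1 / norm p"

text \<open>Extended solution of the Kepler problem q'' = -q/r^3: a continuous path,
  defined on the whole time axis, whose collision times (q = O) form a discrete
  (locally finite) set, which is a solution away from collisions, and which at a
  collision bounces back along the same ray with the same energy.\<close>
definition ext_solution :: "(real \<Rightarrow> real \<times> real) \<Rightarrow> bool" where
  "ext_solution q \<longleftrightarrow>
     continuous_on UNIV q \<and>
     (\<forall>a b. finite {t \<in> {a..b}. q t = 0}) \<and>
     (\<exists>v. (\<forall>t. q t \<noteq> 0 \<longrightarrow>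
              (q has_vector_derivative v t) (at t) \<and>
              (v has_vector_derivative (- (1 / norm (q t) ^ 3)) *\<^sub>R q t) (at t)) \<and>
          (\<forall>t0. q t0 = 0 \<longrightarrow>
              (\<exists>e>0. \<forall>s. 0 < s \<and> s < e \<longrightarrow>
                 q (t0 + s) \<noteq> 0 \<and> q (t0 - s) \<noteq> 0 \<and>
                 (\<exists>c>0. q (t0 + s) = c *\<^sub>R q (t0 - s)) \<and>
                 kep_energy (q (t0 + s)) (v (t0 + s)) = kep_energy (q (t0 - s)) (v (t0 - s)))))"

definition kep_branch :: "(real \<times> real) set \<Rightarrow> bool" where
  "kep_branch K \<longleftrightarrow> (\<exists>q. ext_solution q \<and> K = range q)"

definition line2 :: "real \<times> real \<Rightarrow> real \<times> real \<Rightarrow> (real \<times> real) set" where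
  "line2 p u = {p + t *\<^sub>R u | t. True}"

definition irreducible_branch :: "(real \<times> real) set \<Rightarrow> bool" where
  "irreducible_branch K \<longleftrightarrow> kep_branch K \<and> \<not> (\<exists>p u. u \<noteq> 0 \<and> K \<subseteq> line2 p u)"

definition IrrBranches :: "(real \<times> real) set set" where
  "IrrBranches = {K. irreducible_branch K}"

definition Hspace :: "(real \<times> real \<times> real) set" where
  "Hspace = {(a, b, c). c > 0}"

definition unifocal :: "real \<times> real \<times> real \<Rightarrow> (real \<times> real) set" where
  "unifocal P = (case P of (a, b, c) \<Rightarrow> {(x, y). sqrt (x\<^sup>2 + y\<^sup>2) = a * x + b * y + c})"

definition branch_params :: "(real \<times> real) set \<Rightarrow> real \<times> real \<times> real" where
  "branch_params K = (THE P. P \<in> Hspace \<and> unifocal P = K)"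

definition ray :: "real \<times> real \<Rightarrow> (real \<times> real) set" where
  "ray u = {t *\<^sub>R u | t. t \<ge> 0}"

definition same_ray :: "real \<times> real \<Rightarrow> real \<times> real \<Rightarrow> bool" where
  "same_ray A B \<longleftrightarrow> (\<exists>u. u \<noteq> 0 \<and> A \<in> ray u \<and> B \<in> ray u)"

definition plane3 :: "real \<times> real \<times> real \<Rightarrow> real \<Rightarrow> (real \<times> real \<times> real) set" where
  "plane3 n d = {P. n \<bullet> P = d}"

definition line3 :: "real \<times> real \<times> real \<Rightarrow> real \<times> real \<times> real \<Rightarrow> (real \<times> real \<times> real) set" where
  "line3 P V = {P + t *\<^sub>R V | t. True}"

definition Hboundary :: "(real \<times> real \<times> real) set" where
  "Hboundary = {(a, b, c). c = 0}"

definition gamma_coord :: "real \<times> real \<times> real \<Rightarrow> real" where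
  "gamma_coord P = snd (snd P)"

end

theory Submission
  imports Defs
begin


definition Jset :: "real \<Rightarrow> real set" where
  "Jset e = (if e < 1 then UNIV else {arccos (1/e) <..< 2*pi - arccos (1/e)})"

lemma arc_facts:
  assumes "e \<ge> 1"
  shows "0 \<le> arccos (1/e)" "arccos (1/e) \<le> pi/2" "e * cos (arccos (1/e)) = 1"
proof -
  have h: "0 \<le> 1/e" "1/e \<le> 1" using assms by auto
  show "0 \<le> arccos (1/e)" using h by (intro arccos_lbound) linarith+
  show "arccos (1/e) \<le> pi/2" using h by (rule arccos_le_pi2)
  have "cos (arccos (1/e)) = 1/e" using h by (intro cos_arccos) linarith+
  then show "e * cos (arccos (1/e)) = 1" using assms by simp
qed

lemma J1:
  assumes "e \<ge> 0" "\<psi> \<in> Jset e"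
  shows "e * cos \<psi> < 1"
proof (cases "e < 1")
  case True
  have "e * cos \<psi> \<le> e * 1" using assms(1) by (intro mult_left_mono) auto
  then show ?thesis using True by simp
next
  case False
  let ?a = "arccos (1/e)"
  have e1: "e \<ge> 1" using False by simp
  note af = arc_facts[OF e1]
  have \<psi>: "?a < \<psi>" "\<psi> < 2*pi - ?a" using assms(2) False by (auto simp: Jset_def)
  have "cos \<psi> < cos ?a"
  proof (cases "\<psi> \<le> pi")
    case True
    then show ?thesis using af \<psi> by (intro cos_monotone_0_pi) auto
  next
    case False
    have "cos (2*pi - \<psi>) < cos ?a" using af \<psi> False by (intro cos_monotone_0_pi) auto
    then show ?thesis by simp
  qed
  then have "e * cos \<psi> < e * cos ?a" using e1 by simp
  then show ?thesis using af by simp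
qed

lemma J2:
  assumes "e \<ge> 0" "e * cos \<psi> < 1" "0 \<le> \<psi>" "\<psi> < 2*pi"
  shows "\<psi> \<in> Jset e"
proof (cases "e < 1")
  case True then show ?thesis by (simp add: Jset_def)
next
  case False
  let ?a = "arccos (1/e)"
  have e1: "e \<ge> 1" using False by simp
  note af = arc_facts[OF e1]
  have "\<not> \<psi> \<le> ?a"
  proof
    assume "\<psi> \<le> ?a"
    then have "cos ?a \<le> cos \<psi>" using af assms by (intro cos_monotone_0_pi_le) auto
    then have "e * cos ?a \<le> e * cos \<psi>" using e1 by simp
    then show False using af assms by simp
  qed
  moreover have "\<not> \<psi> \<ge> 2*pi - ?a"
  proof
    assume "\<psi> \<ge> 2*pi - ?a"
    then have "cos ?a \<le> cos (2*pi - \<psi>)" using af assms by (intro cos_monotone_0_pi_le) auto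
    then have "e * cos ?a \<le> e * cos \<psi>" using e1 by simp
    then show False using af assms by simp
  qed
  ultimately show ?thesis using False by (auto simp: Jset_def)
qed

lemma cos_lip: "\<bar>cos u - cos w\<bar> \<le> \<bar>u - w\<bar>" for u w :: real
proof -
  have "\<bar>cos u - cos w\<bar> = 2 * \<bar>sin ((u + w) / 2)\<bar> * \<bar>sin ((w - u) / 2)\<bar>"
    by (simp add: cos_diff_cos abs_mult)
  also have "\<dots> \<le> 2 * 1 * \<bar>(w - u) / 2\<bar>"
    by (intro mult_mono abs_sin_x_le_abs_x) auto
  finally show ?thesis by simp
qed

lemma J5:
  assumes "e \<ge> 1"
  shows "1 - e * cos \<psi> \<le> e * \<bar>\<psi> - arccos (1/e)\<bar>"
    and "1 - e * cos \<psi> \<le> e * \<bar>\<psi> - (2*pi - arccos (1/e))\<bar>"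
proof -
  let ?a = "arccos (1/e)"
  note af = arc_facts[OF assms]
  have "1 - e * cos \<psi> = e * (cos ?a - cos \<psi>)" using af by (simp add: algebra_simps)
  also have "\<dots> \<le> e * \<bar>cos ?a - cos \<psi>\<bar>" using assms by (intro mult_left_mono) auto
  finally have *: "1 - e * cos \<psi> \<le> e * \<bar>cos ?a - cos \<psi>\<bar>" .
  have "\<bar>cos ?a - cos \<psi>\<bar> \<le> \<bar>?a - \<psi>\<bar>" by (rule cos_lip)
  then show "1 - e * cos \<psi> \<le> e * \<bar>\<psi> - ?a\<bar>" using * assms
    by (smt (verit) mult_left_mono)
  have "\<bar>cos (2*pi - ?a) - cos \<psi>\<bar> \<le> \<bar>(2*pi - ?a) - \<psi>\<bar>" by (rule cos_lip)
  then show "1 - e * cos \<psi> \<le> e * \<bar>\<psi> - (2*pi - ?a)\<bar>" using * assms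
    by (smt (verit) cos_2pi_minus mult_left_mono)
qed

lemma J_pi: "pi \<in> Jset e"
proof (cases "e < 1")
  case True then show ?thesis by (simp add: Jset_def)
next
  case False
  then have "e \<ge> 1" by simp
  note af = arc_facts[OF this]
  then show ?thesis using False pi_gt3 by (auto simp: Jset_def)
qed

lemma J_open: "open (Jset e)" by (simp add: Jset_def)

lemma J_interval: "is_interval (Jset e)" by (simp add: Jset_def is_interval_convex_1)


definition Dfn :: "real \<Rightarrow> real \<Rightarrow> real \<Rightarrow> real" where
  "Dfn e \<phi>0 \<theta> = 1 - e * cos (\<theta> - \<phi>0)"
definition Iset :: "real \<Rightarrow> real \<Rightarrow> real set" where
  "Iset e \<phi>0 = {\<theta>. \<theta> - \<phi>0 \<in> Jset e}"
definition rho :: "real \<Rightarrow> real \<Rightarrow> real \<Rightarrow> real \<Rightarrow> real" where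
  "rho e \<phi>0 g \<theta> = g / Dfn e \<phi>0 \<theta>"
definition tf :: "real \<Rightarrow> real \<Rightarrow> real \<Rightarrow> real \<Rightarrow> real" where
  "tf e \<phi>0 g \<theta> = (rho e \<phi>0 g \<theta>)^2 / sqrt g"

lemma Dfn_pos: "e \<ge> 0 \<Longrightarrow> \<theta> \<in> Iset e \<phi>0 \<Longrightarrow> Dfn e \<phi>0 \<theta> > 0"
  using J1[of e "\<theta> - \<phi>0"] by (auto simp: Dfn_def Iset_def)

lemma Iset_eint:
  "\<exists>lo hi::ereal. lo < hi \<and> Iset e \<phi>0 = {\<theta>. lo < ereal \<theta> \<and> ereal \<theta> < hi}"
proof (cases "e < 1")
  case True
  show ?thesis
    by (rule exI[of _ "-\<infinity>"], rule exI[of _ "\<infinity>"]) (use True in \<open>auto simp: Iset_def Jset_def\<close>)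
next
  case False
  then have "e \<ge> 1" by simp
  note af = arc_facts[OF this]
  let ?a = "arccos (1/e)"
  show ?thesis
    by (rule exI[of _ "ereal (?a + \<phi>0)"], rule exI[of _ "ereal (2*pi - ?a + \<phi>0)"])
       (use False af pi_gt3 in \<open>auto simp: Iset_def Jset_def\<close>)
qed

lemma Iset_open: "open (Iset e \<phi>0)"
proof -
  have "Iset e \<phi>0 = (\<lambda>\<theta>. \<theta> - \<phi>0) -` Jset e" by (auto simp: Iset_def)
  moreover have "continuous_on UNIV (\<lambda>\<theta>::real. \<theta> - \<phi>0)" by (intro continuous_intros)
  ultimately show ?thesis using J_open open_vimage by metis
qed

lemma Iset_interval: "is_interval (Iset e \<phi>0)"
proof -
  have *: "\<And>a b x. a \<in> Jset e \<Longrightarrow> b \<in> Jset e \<Longrightarrow> a \<le> x \<Longrightarrow> x \<le> b \<Longrightarrow> x \<in> Jset e"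
    using J_interval[of e] unfolding is_interval_1 by blast
  show ?thesis unfolding is_interval_1 Iset_def
  proof (clarsimp)
    fix a b x assume "a - \<phi>0 \<in> Jset e" "b - \<phi>0 \<in> Jset e" "a \<le> x" "x \<le> b"
    then show "x - \<phi>0 \<in> Jset e" using *[of "a - \<phi>0" "b - \<phi>0" "x - \<phi>0"] by auto
  qed
qed

lemma Iset_mem: "\<phi>0 + pi \<in> Iset e \<phi>0" using J_pi by (simp add: Iset_def)

lemma tf_cont: "e \<ge> 0 \<Longrightarrow> g > 0 \<Longrightarrow> \<theta> \<in> Iset e \<phi>0 \<Longrightarrow> isCont (tf e \<phi>0 g) \<theta>"
  unfolding tf_def rho_def using Dfn_pos[of e \<theta> \<phi>0]
  by (auto simp: Dfn_def intro!: continuous_intros)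

lemma tf_pos: "e \<ge> 0 \<Longrightarrow> g > 0 \<Longrightarrow> \<theta> \<in> Iset e \<phi>0 \<Longrightarrow> tf e \<phi>0 g \<theta> > 0"
  unfolding tf_def rho_def using Dfn_pos[of e \<theta> \<phi>0] by auto

lemma antideriv:
  assumes "e \<ge> 0" "g > 0"
  shows "\<exists>F. \<forall>\<theta>\<in>Iset e \<phi>0. (F has_real_derivative tf e \<phi>0 g \<theta>) (at \<theta>)"
proof -
  obtain lo hi :: ereal where lh: "lo < hi" "Iset e \<phi>0 = {\<theta>. lo < ereal \<theta> \<and> ereal \<theta> < hi}"
    using Iset_eint by blast
  have "\<exists>F. \<forall>x::real. lo < x \<longrightarrow> x < hi \<longrightarrow> (F has_vector_derivative tf e \<phi>0 g x) (at x)"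
    by (rule einterval_antiderivative[OF lh(1)]) (use lh(2) tf_cont[OF assms] in auto)
  then show ?thesis using lh(2)
    by (auto simp: has_real_derivative_iff_has_vector_derivative)
qed


lemma div_sq_mono:
  fixes g D X s :: real
  assumes "g > 0" "s > 0" "0 < D" "D \<le> X"
  shows "(g/X)^2 / s \<le> (g/D)^2 / s"
proof -
  have "g/X \<le> g/D" using assms by (intro divide_left_mono) auto
  moreover have "0 \<le> g/X" using assms by auto
  ultimately have "(g/X)^2 \<le> (g/D)^2" by (intro power_mono) auto
  then show ?thesis using assms by (intro divide_right_mono) auto
qed

lemma tau_exists:
  assumes e0: "e \<ge> 0" and g: "g > 0"
  shows "\<exists>\<tau>. (\<forall>\<theta>\<in>Iset e \<phi>0. (\<tau> has_real_derivative tf e \<phi>0 g \<theta>) (at \<theta>))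
            \<and> inj_on \<tau> (Iset e \<phi>0) \<and> \<tau> ` Iset e \<phi>0 = UNIV"
proof -
  let ?I = "Iset e \<phi>0"
  obtain F where F: "\<forall>\<theta>\<in>?I. (F has_real_derivative tf e \<phi>0 g \<theta>) (at \<theta>)"
    using antideriv[OF e0 g] by blast
  have conv: "\<And>a b x. a \<in> ?I \<Longrightarrow> b \<in> ?I \<Longrightarrow> a \<le> x \<Longrightarrow> x \<le> b \<Longrightarrow> x \<in> ?I"
    using Iset_interval unfolding is_interval_1 by blast
  have mono: "F a < F b" if "a \<in> ?I" "b \<in> ?I" "a < b" for a b
  proof (rule DERIV_pos_imp_increasing[OF that(3)])
    fix x assume "a \<le> x" "x \<le> b"
    then have "x \<in> ?I" using conv that by blast
    then show "\<exists>y. DERIV F x :> y \<and> 0 < y" using F tf_pos[OF e0 g] by blast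
  qed
  have inj: "inj_on F ?I"
    by (rule inj_onI) (metis linorder_neq_iff mono order_less_irrefl)
  have cont: "continuous_on ?I F"
    using F by (intro continuous_at_imp_continuous_on ballI) (auto intro: DERIV_isCont)
  have unb: "(\<exists>a\<in>?I. F a \<le> s) \<and> (\<exists>b\<in>?I. s \<le> F b)" for s
  proof (cases "e < 1")
    case True
    then have I: "?I = UNIV" by (auto simp: Iset_def Jset_def)
    define k where "k = (g/(1+e))^2 / sqrt g"
    have k0: "k > 0" unfolding k_def using g e0 by auto
    have tfk: "k \<le> tf e \<phi>0 g \<theta>" for \<theta>
    proof -
      have "Dfn e \<phi>0 \<theta> > 0" using Dfn_pos[OF e0, of \<theta> \<phi>0] I by auto
      moreover have "Dfn e \<phi>0 \<theta> \<le> 1 + e"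
      proof -
        have "e * (- cos (\<theta> - \<phi>0)) \<le> e * 1" using e0 by (intro mult_left_mono) auto
        then show ?thesis unfolding Dfn_def by simp
      qed
      ultimately show ?thesis unfolding k_def tf_def rho_def
        using div_sq_mono[of g "sqrt g" "Dfn e \<phi>0 \<theta>" "1+e"] g by auto
    qed
    define G where "G \<theta> = F \<theta> - k * \<theta>" for \<theta>
    have G: "DERIV G x :> tf e \<phi>0 g x - k" for x
      unfolding G_def using F I by (auto intro!: derivative_eq_intros)
    have Gm: "G a \<le> G b" if "a \<le> b" for a b
      by (rule DERIV_nonneg_imp_nondecreasing[OF that]) (use G tfk in \<open>metis diff_ge_0_iff_ge\<close>)
    define h where "h = \<bar>s - F 0\<bar> / k + 1"
    have h0: "h > 0" unfolding h_def using k0 by (auto intro: add_nonneg_pos)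
    have kh: "k * h = \<bar>s - F 0\<bar> + k" unfolding h_def using k0 by (simp add: field_simps)
    have "G 0 \<le> G h" using Gm h0 by simp
    then have "F h \<ge> s" unfolding G_def using kh k0 abs_ge_self[of "s - F 0"] by simp
    moreover have "G (-h) \<le> G 0" using Gm h0 by simp
    then have "F (-h) \<le> s" unfolding G_def using kh k0 abs_ge_minus_self[of "s - F 0"] by simp
    ultimately show ?thesis using I by blast
  next
    case False
    then have e1: "e \<ge> 1" by simp
    note af = arc_facts[OF e1]
    define a where "a = arccos (1/e)"
    define lo where "lo = a + \<phi>0"
    define hi where "hi = 2*pi - a + \<phi>0"
    define m where "m = \<phi>0 + pi"
    have I: "?I = {lo<..<hi}" using False unfolding lo_def hi_def a_def
      by (auto simp: Iset_def Jset_def)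
    have lmh: "lo < m" "m < hi" using af pi_gt3 unfolding lo_def hi_def m_def a_def by auto
    define K where "K = g^2 / (e^2 * sqrt g)"
    have K0: "K > 0" unfolding K_def using g e1 by auto
    have tfK: "K / (hi - \<theta>)^2 \<le> tf e \<phi>0 g \<theta> \<and> K / (\<theta> - lo)^2 \<le> tf e \<phi>0 g \<theta>" if "\<theta> \<in> ?I" for \<theta>
    proof -
      have D0: "Dfn e \<phi>0 \<theta> > 0" using Dfn_pos[OF e0 that] .
      have th: "lo < \<theta>" "\<theta> < hi" using that I by auto
      have "Dfn e \<phi>0 \<theta> \<le> e * \<bar>(\<theta> - \<phi>0) - (2*pi - a)\<bar>"
        unfolding Dfn_def a_def by (rule J5(2)[OF e1])
      also have "\<dots> = e * (hi - \<theta>)" using th unfolding hi_def by simp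
      finally have "(g/(e * (hi - \<theta>)))^2 / sqrt g \<le> tf e \<phi>0 g \<theta>"
        unfolding tf_def rho_def using div_sq_mono[of g "sqrt g" "Dfn e \<phi>0 \<theta>"] g D0 by auto
      moreover have "(g/(e * (hi - \<theta>)))^2 / sqrt g = K / (hi - \<theta>)^2"
        unfolding K_def by (simp add: power_divide power_mult_distrib)
      moreover have "Dfn e \<phi>0 \<theta> \<le> e * \<bar>(\<theta> - \<phi>0) - a\<bar>"
        unfolding Dfn_def a_def by (rule J5(1)[OF e1])
      then have "Dfn e \<phi>0 \<theta> \<le> e * (\<theta> - lo)" using th unfolding lo_def by (simp add: algebra_simps)
      then have "(g/(e * (\<theta> - lo)))^2 / sqrt g \<le> tf e \<phi>0 g \<theta>"
        unfolding tf_def rho_def using div_sq_mono[of g "sqrt g" "Dfn e \<phi>0 \<theta>"] g D0 by auto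
      moreover have "(g/(e * (\<theta> - lo)))^2 / sqrt g = K / (\<theta> - lo)^2"
        unfolding K_def by (simp add: power_divide power_mult_distrib)
      ultimately show ?thesis by simp
    qed
    define G where "G \<theta> = F \<theta> - K / (hi - \<theta>)" for \<theta>
    define H where "H \<theta> = F \<theta> + K / (\<theta> - lo)" for \<theta>
    have Gd: "DERIV G x :> tf e \<phi>0 g x - K / (hi - x)^2" if "x \<in> ?I" for x
    proof -
      have "x < hi" using that I by auto
      then show ?thesis unfolding G_def using F that
        by (auto intro!: derivative_eq_intros simp: power2_eq_square)
    qed
    have Hd: "DERIV H x :> tf e \<phi>0 g x - K / (x - lo)^2" if "x \<in> ?I" for x
    proof -
      have "x > lo" using that I by auto
      then show ?thesis unfolding H_def using F that
        by (auto intro!: derivative_eq_intros simp: power2_eq_square)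
    qed
    define d1 where "d1 = min ((hi - m)/2) (K / (\<bar>s - G m\<bar> + 1))"
    have "0 < d1" unfolding d1_def using lmh K0 by simp
    moreover have "d1 \<le> (hi - m)/2" unfolding d1_def by (rule min.cobounded1)
    moreover have "d1 \<le> K / (\<bar>s - G m\<bar> + 1)" unfolding d1_def by (rule min.cobounded2)
    ultimately have d1: "0 < d1" "d1 \<le> (hi - m)/2" "d1 \<le> K / (\<bar>s - G m\<bar> + 1)" by auto
    have "K / d1 \<ge> \<bar>s - G m\<bar> + 1"
    proof -
      have X: "\<bar>s - G m\<bar> + 1 > 0" by simp
      have "d1 * (\<bar>s - G m\<bar> + 1) \<le> K" using d1(3) X by (simp add: pos_le_divide_eq)
      then show ?thesis using d1(1) by (simp add: pos_le_divide_eq mult.commute)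
    qed
    moreover have "G m \<le> G (hi - d1)"
    proof (rule DERIV_nonneg_imp_nondecreasing[of m "hi - d1" G])
      show "m \<le> hi - d1" using d1 by simp
      fix x assume "m \<le> x" "x \<le> hi - d1"
      then have "x \<in> ?I" using I lmh d1 by auto
      then show "\<exists>y. DERIV G x :> y \<and> 0 \<le> y" using Gd tfK by force
    qed
    ultimately have up: "s \<le> F (hi - d1)" unfolding G_def by simp
    define d2 where "d2 = min ((m - lo)/2) (K / (\<bar>s - H m\<bar> + 1))"
    have "0 < d2" unfolding d2_def using lmh K0 by simp
    moreover have "d2 \<le> (m - lo)/2" unfolding d2_def by (rule min.cobounded1)
    moreover have "d2 \<le> K / (\<bar>s - H m\<bar> + 1)" unfolding d2_def by (rule min.cobounded2)
    ultimately have d2: "0 < d2" "d2 \<le> (m - lo)/2" "d2 \<le> K / (\<bar>s - H m\<bar> + 1)" by auto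
    have "K / d2 \<ge> \<bar>s - H m\<bar> + 1"
    proof -
      have X: "\<bar>s - H m\<bar> + 1 > 0" by simp
      have "d2 * (\<bar>s - H m\<bar> + 1) \<le> K" using d2(3) X by (simp add: pos_le_divide_eq)
      then show ?thesis using d2(1) by (simp add: pos_le_divide_eq mult.commute)
    qed
    moreover have "H (lo + d2) \<le> H m"
    proof (rule DERIV_nonneg_imp_nondecreasing[of "lo + d2" m H])
      show "lo + d2 \<le> m" using d2 by simp
      fix x assume "lo + d2 \<le> x" "x \<le> m"
      then have "x \<in> ?I" using I lmh d2 by auto
      then show "\<exists>y. DERIV H x :> y \<and> 0 \<le> y" using Hd tfK by force
    qed
    ultimately have dn: "F (lo + d2) \<le> s" unfolding H_def by simp
    have "hi - d1 \<in> ?I" "lo + d2 \<in> ?I" using I d1 d2 lmh by auto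
    then show ?thesis using up dn by blast
  qed
  have "F ` ?I = UNIV"
  proof -
    have "connected (F ` ?I)"
      using cont Iset_interval is_interval_connected_1 connected_continuous_image by blast
    then have ii: "is_interval (F ` ?I)" by (simp add: is_interval_connected_1)
    show ?thesis
    proof (intro set_eqI iffI)
      fix s :: real
      obtain a b where ab: "a \<in> ?I" "F a \<le> s" "b \<in> ?I" "s \<le> F b" using unb[of s] by blast
      show "s \<in> F ` ?I" using ii ab unfolding is_interval_1 by (meson imageI)
    qed auto
  qed
  then show ?thesis using F inj by blast
qed


lemma Dfn_alt: "Dfn e \<phi>0 \<theta> = 1 - (e * cos \<phi>0) * cos \<theta> - (e * sin \<phi>0) * sin \<theta>"
  unfolding Dfn_def by (simp add: cos_diff algebra_simps)

lemma Dfn_deriv: "(Dfn e \<phi>0 has_real_derivative e * sin \<theta> * cos \<phi>0 - e * cos \<theta> * sin \<phi>0) (at \<theta>)"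
  unfolding Dfn_alt[abs_def] by (auto intro!: derivative_eq_intros simp: algebra_simps)

lemma deriv_x:
  assumes "Dfn e \<phi>0 \<theta> \<noteq> 0"
  shows "((\<lambda>\<theta>. rho e \<phi>0 g \<theta> * cos \<theta>) has_real_derivative
           (g / (Dfn e \<phi>0 \<theta>)^2) * (e * sin \<phi>0 - sin \<theta>)) (at \<theta>)"
proof -
  have *: "((\<lambda>\<theta>. g * cos \<theta> / Dfn e \<phi>0 \<theta>) has_real_derivative
     ((g * (- sin \<theta>)) * Dfn e \<phi>0 \<theta> - (g * cos \<theta>) * (e * sin \<theta> * cos \<phi>0 - e * cos \<theta> * sin \<phi>0))
       / (Dfn e \<phi>0 \<theta> * Dfn e \<phi>0 \<theta>)) (at \<theta>)"
    by (intro DERIV_divide DERIV_cmult DERIV_cos Dfn_deriv assms) 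
  have eq: "((g * (- sin \<theta>)) * Dfn e \<phi>0 \<theta> - (g * cos \<theta>) * (e * sin \<theta> * cos \<phi>0 - e * cos \<theta> * sin \<phi>0))
       / (Dfn e \<phi>0 \<theta> * Dfn e \<phi>0 \<theta>) = (g / (Dfn e \<phi>0 \<theta>)^2) * (e * sin \<phi>0 - sin \<theta>)"
  proof -
    have "(g * (- sin \<theta>)) * Dfn e \<phi>0 \<theta> - (g * cos \<theta>) * (e * sin \<theta> * cos \<phi>0 - e * cos \<theta> * sin \<phi>0)
       = g * (e * sin \<phi>0 * (sin \<theta>^2 + cos \<theta>^2) - sin \<theta>)"
      unfolding Dfn_alt power2_eq_square by algebra
    also have "\<dots> = g * (e * sin \<phi>0 - sin \<theta>)" by simp
    finally show ?thesis by (simp add: power2_eq_square)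
  qed
  show ?thesis using * unfolding eq by (simp add: rho_def)
qed

lemma deriv_y:
  assumes "Dfn e \<phi>0 \<theta> \<noteq> 0"
  shows "((\<lambda>\<theta>. rho e \<phi>0 g \<theta> * sin \<theta>) has_real_derivative
           (g / (Dfn e \<phi>0 \<theta>)^2) * (cos \<theta> - e * cos \<phi>0)) (at \<theta>)"
proof -
  have *: "((\<lambda>\<theta>. g * sin \<theta> / Dfn e \<phi>0 \<theta>) has_real_derivative
     ((g * cos \<theta>) * Dfn e \<phi>0 \<theta> - (g * sin \<theta>) * (e * sin \<theta> * cos \<phi>0 - e * cos \<theta> * sin \<phi>0))
       / (Dfn e \<phi>0 \<theta> * Dfn e \<phi>0 \<theta>)) (at \<theta>)"
    by (intro DERIV_divide DERIV_cmult DERIV_sin Dfn_deriv assms) 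
  have eq: "((g * cos \<theta>) * Dfn e \<phi>0 \<theta> - (g * sin \<theta>) * (e * sin \<theta> * cos \<phi>0 - e * cos \<theta> * sin \<phi>0))
       / (Dfn e \<phi>0 \<theta> * Dfn e \<phi>0 \<theta>) = (g / (Dfn e \<phi>0 \<theta>)^2) * (cos \<theta> - e * cos \<phi>0)"
  proof -
    have "(g * cos \<theta>) * Dfn e \<phi>0 \<theta> - (g * sin \<theta>) * (e * sin \<theta> * cos \<phi>0 - e * cos \<theta> * sin \<phi>0)
       = g * (cos \<theta> - e * cos \<phi>0 * (sin \<theta>^2 + cos \<theta>^2))"
      unfolding Dfn_alt power2_eq_square by algebra
    also have "\<dots> = g * (cos \<theta> - e * cos \<phi>0)" by simp
    finally show ?thesis by (simp add: power2_eq_square)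
  qed
  show ?thesis using * unfolding eq by (simp add: rho_def)
qed


lemma polar_params:
  "\<exists>e \<phi>0. e \<ge> 0 \<and> 0 \<le> \<phi>0 \<and> \<phi>0 < 2*pi \<and> \<alpha> = e * cos \<phi>0 \<and> \<beta> = e * sin \<phi>0"
proof (cases "\<alpha> = 0 \<and> \<beta> = 0")
  case True then show ?thesis by (intro exI[of _ 0]) auto
next
  case False
  define e where "e = sqrt (\<alpha>^2 + \<beta>^2)"
  have e0: "e > 0" unfolding e_def using False by (simp add: sum_power2_gt_zero_iff)
  have "(\<alpha>/e)^2 + (\<beta>/e)^2 = 1"
    using e0 False unfolding e_def by (simp add: power_divide add_divide_distrib[symmetric] add_nonneg_nonneg sum_power2_gt_zero_iff)
  then obtain t where t: "0 \<le> t" "t < 2*pi" "\<alpha>/e = cos t" "\<beta>/e = sin t" by (rule sincos_total_2pi)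
  show ?thesis
    by (rule exI[of _ e], rule exI[of _ t]) (use e0 t in \<open>auto simp: field_simps\<close>)
qed

lemma norm_polar: "norm (r * cos \<theta>, r * sin \<theta>) = \<bar>r\<bar>"
proof -
  have "norm (r * cos \<theta>, r * sin \<theta>) = sqrt ((r * cos \<theta>)^2 + (r * sin \<theta>)^2)"
    by (simp add: norm_Pair)
  also have "(r * cos \<theta>)^2 + (r * sin \<theta>)^2 = r^2"
    by (simp add: power_mult_distrib algebra_simps flip: distrib_left)
  finally show ?thesis by simp
qed

lemma unifocal_iff: "(x, y) \<in> unifocal (a, b, c) \<longleftrightarrow> sqrt (x^2 + y^2) = a * x + b * y + c"
  by (simp add: unifocal_def)

lemma rho_pos: "e \<ge> 0 \<Longrightarrow> g > 0 \<Longrightarrow> \<theta> \<in> Iset e \<phi>0 \<Longrightarrow> rho e \<phi>0 g \<theta> > 0"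
  unfolding rho_def using Dfn_pos by auto

lemma on_conic:
  assumes "e \<ge> 0" "g > 0" "\<theta> \<in> Iset e \<phi>0"
  shows "(rho e \<phi>0 g \<theta> * cos \<theta>, rho e \<phi>0 g \<theta> * sin \<theta>) \<in> unifocal (e * cos \<phi>0, e * sin \<phi>0, g)"
proof -
  let ?r = "rho e \<phi>0 g \<theta>"
  have r0: "?r > 0" using rho_pos assms by auto
  have D0: "Dfn e \<phi>0 \<theta> > 0" using Dfn_pos assms by auto
  have "sqrt ((?r * cos \<theta>)^2 + (?r * sin \<theta>)^2) = ?r"
    using norm_polar[of ?r \<theta>] r0 by (simp add: norm_Pair)
  moreover have "?r * Dfn e \<phi>0 \<theta> = g" using D0 by (simp add: rho_def)
  then have "?r = e * cos \<phi>0 * (?r * cos \<theta>) + e * sin \<phi>0 * (?r * sin \<theta>) + g"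
    unfolding Dfn_alt by (simp add: algebra_simps)
  ultimately show ?thesis by (simp add: unifocal_iff)
qed

lemma rep:
  assumes e0: "e \<ge> 0" and g0: "g > 0" and ph: "0 \<le> \<phi>0" "\<phi>0 < 2*pi"
    and p: "(x, y) \<in> unifocal (e * cos \<phi>0, e * sin \<phi>0, g)"
  shows "\<exists>\<theta>\<in>Iset e \<phi>0. x = rho e \<phi>0 g \<theta> * cos \<theta> \<and> y = rho e \<phi>0 g \<theta> * sin \<theta>"
proof -
  define R where "R = sqrt (x^2 + y^2)"
  have pR: "R = e * cos \<phi>0 * x + e * sin \<phi>0 * y + g" using p by (simp add: unifocal_iff R_def)
  have R0: "R > 0"
  proof -
    have "\<not> (x = 0 \<and> y = 0)" using pR g0 unfolding R_def by auto
    then show ?thesis unfolding R_def by (simp add: sum_power2_gt_zero_iff)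
  qed
  have nz: "x \<noteq> 0 \<or> y \<noteq> 0" using pR g0 unfolding R_def by auto
  have "(x/R)^2 + (y/R)^2 = 1"
    using R0 nz unfolding R_def by (simp add: power_divide add_divide_distrib[symmetric] add_nonneg_nonneg sum_power2_gt_zero_iff)
  then obtain t where t: "0 \<le> t" "t < 2*pi" "x/R = cos t" "y/R = sin t" by (rule sincos_total_2pi)
  have xy: "x = R * cos t" "y = R * sin t" using t R0 by (auto simp: field_simps)
  have RD: "R * Dfn e \<phi>0 t = g" using pR unfolding Dfn_alt xy by (simp add: algebra_simps)
  then have D0: "Dfn e \<phi>0 t > 0" using R0 g0 by (metis zero_less_mult_pos)
  then have ec: "e * cos (t - \<phi>0) < 1" by (simp add: Dfn_def)
  obtain \<theta> where th: "\<theta> \<in> Iset e \<phi>0" "cos \<theta> = cos t" "sin \<theta> = sin t" "Dfn e \<phi>0 \<theta> = Dfn e \<phi>0 t"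
  proof (cases "\<phi>0 \<le> t")
    case True
    then have "t - \<phi>0 \<in> Jset e" using J2[OF e0 ec] t ph by auto
    then show ?thesis using that[of t] by (auto simp: Iset_def)
  next
    case False
    have c: "cos (t + 2*pi - \<phi>0) = cos (t - \<phi>0)"
      by (metis cos_periodic add_diff_eq diff_add_eq)
    have "t + 2*pi - \<phi>0 \<in> Jset e" using J2[OF e0, of "t + 2*pi - \<phi>0"] ec c t ph False by auto
    then show ?thesis using that[of "t + 2*pi"] c by (auto simp: Iset_def Dfn_def)
  qed
  have "rho e \<phi>0 g \<theta> = R" using th(4) RD D0 by (simp add: rho_def field_simps)
  then show ?thesis using th xy by (intro bexI[of _ \<theta>]) auto
qed

lemma alg1: fixes g D X :: real assumes "g > 0" "D \<noteq> 0"
  shows "(g / D^2) * X * (sqrt g * D^2 / g^2) = X / sqrt g"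
proof -
  have "(g / D^2) * X * (sqrt g * D^2 / g^2) = X * (sqrt g / g)"
    using assms by (simp add: field_simps power2_eq_square)
  also have "sqrt g / g = 1 / sqrt g"
  proof -
    have gg: "g = sqrt g * sqrt g" using assms by simp
    have "sqrt g / g = sqrt g / (sqrt g * sqrt g)" by (subst gg) (rule refl)
    also have "\<dots> = 1 / sqrt g" using assms by (simp add: field_simps del: real_sqrt_mult_self)
    finally show ?thesis .
  qed
  finally show ?thesis by simp
qed
lemma alg2: fixes g D X :: real assumes "g > 0" "D \<noteq> 0"
  shows "(- X * (sqrt g * D^2 / g^2)) / sqrt g = - (1 / (g / D) ^ 3) * ((g / D) * X)"
proof -
  have s: "sqrt g \<noteq> 0" using assms by simp
  have "(- X * (sqrt g * D^2 / g^2)) / sqrt g = - X * D^2 / g^2" using s by simp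
  also have "\<dots> = - (1 / (g / D) ^ 3) * ((g / D) * X)" using assms
    by (simp add: field_simps power2_eq_square power3_eq_cube)
  finally show ?thesis .
qed



lemma exists_sol:
  assumes e0: "e \<ge> 0" and g0: "g > 0" and ph: "0 \<le> \<phi>0" "\<phi>0 < 2*pi"
  shows "\<exists>q. ext_solution q \<and> range q = unifocal (e * cos \<phi>0, e * sin \<phi>0, g)"
proof -
  let ?I = "Iset e \<phi>0"
  obtain \<tau> where \<tau>: "\<forall>\<theta>\<in>?I. (\<tau> has_real_derivative tf e \<phi>0 g \<theta>) (at \<theta>)"
    "inj_on \<tau> ?I" "\<tau> ` ?I = UNIV"
    using tau_exists[OF e0 g0] by blast
  define \<sigma> where "\<sigma> = inv_into ?I \<tau>"
  have sI: "\<sigma> t \<in> ?I" for t unfolding \<sigma>_def by (metis \<tau>(3) UNIV_I inv_into_into)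
  have ts: "\<tau> (\<sigma> t) = t" for t unfolding \<sigma>_def by (metis \<tau>(3) UNIV_I f_inv_into_f)
  have st: "\<sigma> (\<tau> \<theta>) = \<theta>" if "\<theta> \<in> ?I" for \<theta> unfolding \<sigma>_def using \<tau>(2) that by simp
  have ds: "(\<sigma> has_real_derivative inverse (tf e \<phi>0 g (\<sigma> t))) (at t)" for t
  proof -
    obtain d where d: "d > 0" "cball (\<sigma> t) d \<subseteq> ?I"
      using Iset_open sI open_contains_cball by blast
    have zI: "z \<in> ?I" if "\<bar>z - \<sigma> t\<bar> \<le> d" for z
      using d that by (auto simp: dist_real_def abs_minus_commute)
    have "isCont \<sigma> (\<tau> (\<sigma> t))"
      by (rule isCont_inverse_function[OF d(1)]) (use zI st \<tau>(1) DERIV_isCont in blast)+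
    then have c: "isCont \<sigma> t" by (simp add: ts)
    show ?thesis
      by (rule DERIV_inverse_function[where a="t - 1" and b="t + 1"])
         (use \<tau>(1) sI tf_pos[OF e0 g0 sI[of t]] ts c in \<open>auto\<close>)
  qed
  define q where "q t = (rho e \<phi>0 g (\<sigma> t) * cos (\<sigma> t), rho e \<phi>0 g (\<sigma> t) * sin (\<sigma> t))" for t
  define v where "v t = ((e * sin \<phi>0 - sin (\<sigma> t)) / sqrt g, (cos (\<sigma> t) - e * cos \<phi>0) / sqrt g)" for t
  have sg: "sqrt g > 0" "sqrt g * sqrt g = g" using g0 by auto
  have D0: "Dfn e \<phi>0 (\<sigma> t) > 0" for t using Dfn_pos[OF e0 sI] .
  have r0: "rho e \<phi>0 g (\<sigma> t) > 0" for t using rho_pos[OF e0 g0 sI] .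
  have nq: "norm (q t) = rho e \<phi>0 g (\<sigma> t)" for t unfolding q_def using norm_polar r0[of t] by simp
  have tfv: "inverse (tf e \<phi>0 g \<theta>) = sqrt g * (Dfn e \<phi>0 \<theta>)^2 / g^2" if "Dfn e \<phi>0 \<theta> > 0" for \<theta>
    using that sg by (simp add: tf_def rho_def field_simps power2_eq_square)
  have dq: "(q has_vector_derivative v t) (at t)" for t
  proof -
    let ?D = "Dfn e \<phi>0 (\<sigma> t)"
    have x: "((\<lambda>t. rho e \<phi>0 g (\<sigma> t) * cos (\<sigma> t)) has_real_derivative
        (g / ?D^2) * (e * sin \<phi>0 - sin (\<sigma> t)) * inverse (tf e \<phi>0 g (\<sigma> t))) (at t)"
      using DERIV_chain2[OF deriv_x ds] D0 by (metis less_irrefl)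
    have y: "((\<lambda>t. rho e \<phi>0 g (\<sigma> t) * sin (\<sigma> t)) has_real_derivative
        (g / ?D^2) * (cos (\<sigma> t) - e * cos \<phi>0) * inverse (tf e \<phi>0 g (\<sigma> t))) (at t)"
      using DERIV_chain2[OF deriv_y ds] D0 by (metis less_irrefl)
    have e1: "(g / ?D^2) * (e * sin \<phi>0 - sin (\<sigma> t)) * inverse (tf e \<phi>0 g (\<sigma> t)) = (e * sin \<phi>0 - sin (\<sigma> t)) / sqrt g"
      unfolding tfv[OF D0] using D0[of t] g0 by (intro alg1) auto
    have e2: "(g / ?D^2) * (cos (\<sigma> t) - e * cos \<phi>0) * inverse (tf e \<phi>0 g (\<sigma> t)) = (cos (\<sigma> t) - e * cos \<phi>0) / sqrt g"
      unfolding tfv[OF D0] using D0[of t] g0 by (intro alg1) auto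
    show ?thesis using x y unfolding e1 e2 q_def[abs_def] v_def
      by (auto intro!: has_vector_derivative_Pair simp: has_real_derivative_iff_has_vector_derivative)
  qed
  have dv: "(v has_vector_derivative (- (1 / norm (q t) ^ 3)) *\<^sub>R q t) (at t)" for t
  proof -
    let ?D = "Dfn e \<phi>0 (\<sigma> t)"
    have x: "((\<lambda>t. (e * sin \<phi>0 - sin (\<sigma> t)) / sqrt g) has_real_derivative
        (- cos (\<sigma> t) * inverse (tf e \<phi>0 g (\<sigma> t))) / sqrt g) (at t)"
    proof (rule DERIV_cdivide)
      show "((\<lambda>t. e * sin \<phi>0 - sin (\<sigma> t)) has_real_derivative - cos (\<sigma> t) * inverse (tf e \<phi>0 g (\<sigma> t))) (at t)"
        by (auto intro!: derivative_eq_intros ds)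
    qed
    have y: "((\<lambda>t. (cos (\<sigma> t) - e * cos \<phi>0) / sqrt g) has_real_derivative
        (- sin (\<sigma> t) * inverse (tf e \<phi>0 g (\<sigma> t))) / sqrt g) (at t)"
    proof (rule DERIV_cdivide)
      show "((\<lambda>t. cos (\<sigma> t) - e * cos \<phi>0) has_real_derivative - sin (\<sigma> t) * inverse (tf e \<phi>0 g (\<sigma> t))) (at t)"
        by (auto intro!: derivative_eq_intros ds)
    qed
    have rr: "rho e \<phi>0 g (\<sigma> t) = g / ?D" by (simp add: rho_def)
    have e1: "(- cos (\<sigma> t) * inverse (tf e \<phi>0 g (\<sigma> t))) / sqrt g
       = - (1 / rho e \<phi>0 g (\<sigma> t) ^ 3) * (rho e \<phi>0 g (\<sigma> t) * cos (\<sigma> t))"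
      unfolding tfv[OF D0] rr using D0[of t] g0 by (intro alg2) auto
    have e2: "(- sin (\<sigma> t) * inverse (tf e \<phi>0 g (\<sigma> t))) / sqrt g
       = - (1 / rho e \<phi>0 g (\<sigma> t) ^ 3) * (rho e \<phi>0 g (\<sigma> t) * sin (\<sigma> t))"
      unfolding tfv[OF D0] rr using D0[of t] g0 by (intro alg2) auto
    have "(v has_vector_derivative (- (1 / rho e \<phi>0 g (\<sigma> t) ^ 3) * (rho e \<phi>0 g (\<sigma> t) * cos (\<sigma> t)),
           - (1 / rho e \<phi>0 g (\<sigma> t) ^ 3) * (rho e \<phi>0 g (\<sigma> t) * sin (\<sigma> t)))) (at t)"
      using x y unfolding e1 e2 v_def[abs_def]
      by (auto intro!: has_vector_derivative_Pair simp: has_real_derivative_iff_has_vector_derivative)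
    moreover have "norm (q t) = rho e \<phi>0 g (\<sigma> t)" by (rule nq)
    ultimately show ?thesis by (simp add: q_def[of t])
  qed
  have qnz: "q t \<noteq> 0" for t using nq[of t] r0[of t] by auto
  have "ext_solution q"
    unfolding ext_solution_def
  proof (intro conjI allI exI[of _ v])
    show "continuous_on UNIV q"
      using dq by (intro continuous_at_imp_continuous_on ballI)
        (meson has_vector_derivative_continuous)
    fix a b show "finite {t \<in> {a..b}. q t = 0}" using qnz by simp
  qed (use dq dv qnz in auto)
  moreover have "range q = unifocal (e * cos \<phi>0, e * sin \<phi>0, g)"
  proof
    show "range q \<subseteq> unifocal (e * cos \<phi>0, e * sin \<phi>0, g)"
      unfolding q_def using on_conic[OF e0 g0 sI] by auto
    show "unifocal (e * cos \<phi>0, e * sin \<phi>0, g) \<subseteq> range q"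
    proof
      fix p assume p: "p \<in> unifocal (e * cos \<phi>0, e * sin \<phi>0, g)"
      obtain x y where pxy: "p = (x, y)" by (cases p)
      obtain \<theta> where th: "\<theta> \<in> ?I" "x = rho e \<phi>0 g \<theta> * cos \<theta>" "y = rho e \<phi>0 g \<theta> * sin \<theta>"
        using rep[OF e0 g0 ph] p pxy by blast
      have "q (\<tau> \<theta>) = p" unfolding q_def using st[OF th(1)] th pxy by simp
      then show "p \<in> range q" by (metis rangeI)
    qed
  qed
  ultimately show ?thesis by blast
qed



definition ksol :: "(real \<Rightarrow> real \<times> real) \<Rightarrow> (real \<Rightarrow> real \<times> real) \<Rightarrow> real set \<Rightarrow> bool" where
  "ksol q v S \<longleftrightarrow> (\<forall>t\<in>S. q t \<noteq> 0 \<and> (q has_vector_derivative v t) (at t) \<and>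
      (v has_vector_derivative (- (1 / norm (q t) ^ 3)) *\<^sub>R q t) (at t))"

definition ang :: "(real \<Rightarrow> real \<times> real) \<Rightarrow> (real \<Rightarrow> real \<times> real) \<Rightarrow> real \<Rightarrow> real" where
  "ang q v t = fst (q t) * snd (v t) - snd (q t) * fst (v t)"
definition alph :: "(real \<Rightarrow> real \<times> real) \<Rightarrow> (real \<Rightarrow> real \<times> real) \<Rightarrow> real \<Rightarrow> real" where
  "alph q v t = fst (q t) / norm (q t) - snd (v t) * ang q v t"
definition bet :: "(real \<Rightarrow> real \<times> real) \<Rightarrow> (real \<Rightarrow> real \<times> real) \<Rightarrow> real \<Rightarrow> real" where
  "bet q v t = snd (q t) / norm (q t) + fst (v t) * ang q v t"

lemma comp_deriv:
  assumes "(q has_vector_derivative w) (at t)"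
  shows "((\<lambda>s. fst (q s)) has_real_derivative fst w) (at t)"
    and "((\<lambda>s. snd (q s)) has_real_derivative snd w) (at t)"
proof -
  have d: "(q has_derivative (\<lambda>h. h *\<^sub>R w)) (at t)" using assms by (simp add: has_vector_derivative_def)
  have "((\<lambda>s. fst (q s)) has_derivative (\<lambda>h. fst (h *\<^sub>R w))) (at t)" by (rule has_derivative_fst[OF d])
  then show "((\<lambda>s. fst (q s)) has_real_derivative fst w) (at t)"
    by (simp add: has_real_derivative_iff_has_vector_derivative has_vector_derivative_def)
  have "((\<lambda>s. snd (q s)) has_derivative (\<lambda>h. snd (h *\<^sub>R w))) (at t)" by (rule has_derivative_snd[OF d])
  then show "((\<lambda>s. snd (q s)) has_real_derivative snd w) (at t)"
    by (simp add: has_real_derivative_iff_has_vector_derivative has_vector_derivative_def)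
qed

lemma norm_xy: "norm p = sqrt ((fst p)^2 + (snd p)^2)" for p :: "real \<times> real"
  by (cases p) (simp add: norm_Pair)

lemma norm_sq: "(norm p)^2 = (fst p)^2 + (snd p)^2" for p :: "real \<times> real"
  by (simp add: norm_xy add_nonneg_nonneg)

lemma norm_deriv:
  assumes "(q has_vector_derivative w) (at t)" "q t \<noteq> 0"
  shows "((\<lambda>s. norm (q s)) has_real_derivative (fst (q t) * fst w + snd (q t) * snd w) / norm (q t)) (at t)"
proof -
  have pos: "(fst (q t))^2 + (snd (q t))^2 > 0"
    using assms(2) by (metis norm_sq norm_zero zero_less_norm_iff zero_less_power)
  have h: "((\<lambda>s. (fst (q s))^2 + (snd (q s))^2) has_real_derivative
      (2 * fst (q t) * fst w + 2 * snd (q t) * snd w)) (at t)"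
    by (auto intro!: derivative_eq_intros comp_deriv[OF assms(1)] simp: power2_eq_square)
  have D1: "((\<lambda>s. sqrt ((fst (q s))^2 + (snd (q s))^2)) has_real_derivative
      inverse (sqrt ((fst (q t))^2 + (snd (q t))^2)) / 2 * (2 * fst (q t) * fst w + 2 * snd (q t) * snd w)) (at t)"
    by (rule DERIV_chain2[OF DERIV_real_sqrt[OF pos] h])
  have eqX: "inverse (sqrt ((fst (q t))^2 + (snd (q t))^2)) / 2 * (2 * fst (q t) * fst w + 2 * snd (q t) * snd w)
     = (fst (q t) * fst w + snd (q t) * snd w) / norm (q t)"
    unfolding norm_xy[symmetric, of "q t"] using assms(2) by (simp add: field_simps)
  have fn: "(\<lambda>s. sqrt ((fst (q s))^2 + (snd (q s))^2)) = (\<lambda>s. norm (q s))" by (simp add: norm_xy)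
  show ?thesis using D1 unfolding eqX fn .
qed

lemma sol_derivs:
  assumes "ksol q v S" "t \<in> S"
  shows "(ang q v has_real_derivative 0) (at t)"
    and "(alph q v has_real_derivative 0) (at t)"
    and "(bet q v has_real_derivative 0) (at t)"
proof -
  have nz: "q t \<noteq> 0" and dq: "(q has_vector_derivative v t) (at t)"
    and dv: "(v has_vector_derivative (- (1 / norm (q t) ^ 3)) *\<^sub>R q t) (at t)"
    using assms by (auto simp: ksol_def)
  define r where "r = norm (q t)"
  have r0: "r > 0" using nz by (simp add: r_def)
  note x = comp_deriv(1)[OF dq] and y = comp_deriv(2)[OF dq]
  note vx = comp_deriv(1)[OF dv] and vy = comp_deriv(2)[OF dv]
  note nd = norm_deriv[OF dq nz]
  have r2: "r^2 = (fst (q t))^2 + (snd (q t))^2" unfolding r_def by (rule norm_sq)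
  have A: "(ang q v has_real_derivative
     fst (v t) * snd (v t) + fst (q t) * (- (1 / r^3) * snd (q t))
     - (snd (v t) * fst (v t) + snd (q t) * (- (1 / r^3) * fst (q t)))) (at t)"
    unfolding ang_def[abs_def] r_def
    by (rule derivative_eq_intros x y vx vy refl | simp)+
  then show "(ang q v has_real_derivative 0) (at t)" by (simp add: algebra_simps)
  then have A0: "(ang q v has_real_derivative 0) (at t)" .
  have "(alph q v has_real_derivative
     (fst (v t) * r - fst (q t) * ((fst (q t) * fst (v t) + snd (q t) * snd (v t)) / r)) / (r * r)
     - ((- (1 / r^3) * snd (q t)) * ang q v t + snd (v t) * 0)) (at t)"
    unfolding alph_def[abs_def] r_def
    by (rule derivative_eq_intros x y vx vy nd A0 refl | use nz in simp)+
  moreover have "(fst (v t) * r - fst (q t) * ((fst (q t) * fst (v t) + snd (q t) * snd (v t)) / r)) / (r * r)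
     - ((- (1 / r^3) * snd (q t)) * ang q v t + snd (v t) * 0) = 0"
  proof -
    have "fst (v t) * r - fst (q t) * ((fst (q t) * fst (v t) + snd (q t) * snd (v t)) / r)
        = (fst (v t) * r^2 - fst (q t) * (fst (q t) * fst (v t) + snd (q t) * snd (v t))) / r"
      using r0 by (simp add: field_simps power2_eq_square)
    also have "\<dots> = - snd (q t) * ang q v t / r" unfolding r2 ang_def
      by (simp add: algebra_simps power2_eq_square)
    finally have E: "fst (v t) * r - fst (q t) * ((fst (q t) * fst (v t) + snd (q t) * snd (v t)) / r) = - snd (q t) * ang q v t / r" .
    show ?thesis unfolding E using r0 by (simp add: field_simps power3_eq_cube)
  qed
  ultimately show "(alph q v has_real_derivative 0) (at t)" by simp
  have "(bet q v has_real_derivative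
     (snd (v t) * r - snd (q t) * ((fst (q t) * fst (v t) + snd (q t) * snd (v t)) / r)) / (r * r)
     + ((- (1 / r^3) * fst (q t)) * ang q v t + fst (v t) * 0)) (at t)"
    unfolding bet_def[abs_def] r_def
    by (rule derivative_eq_intros x y vx vy nd A0 refl | use nz in simp)+
  moreover have "(snd (v t) * r - snd (q t) * ((fst (q t) * fst (v t) + snd (q t) * snd (v t)) / r)) / (r * r)
     + ((- (1 / r^3) * fst (q t)) * ang q v t + fst (v t) * 0) = 0"
  proof -
    have "snd (v t) * r - snd (q t) * ((fst (q t) * fst (v t) + snd (q t) * snd (v t)) / r)
        = (snd (v t) * r^2 - snd (q t) * (fst (q t) * fst (v t) + snd (q t) * snd (v t))) / r"
      using r0 by (simp add: field_simps power2_eq_square)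
    also have "\<dots> = fst (q t) * ang q v t / r" unfolding r2 ang_def
      by (simp add: algebra_simps power2_eq_square)
    finally have E: "snd (v t) * r - snd (q t) * ((fst (q t) * fst (v t) + snd (q t) * snd (v t)) / r) = fst (q t) * ang q v t / r" .
    show ?thesis unfolding E using r0 by (simp add: field_simps power3_eq_cube)
  qed
  ultimately show "(bet q v has_real_derivative 0) (at t)" by simp
qed


lemma sol_const:
  assumes "ksol q v S" "convex S" "t \<in> S" "s \<in> S"
  shows "ang q v t = ang q v s \<and> alph q v t = alph q v s \<and> bet q v t = bet q v s"
proof -
  have "\<exists>c. \<forall>x\<in>S. ang q v x = c"
    by (rule has_field_derivative_zero_constant[OF assms(2)])
       (use sol_derivs(1)[OF assms(1)] in \<open>blast intro: has_field_derivative_at_within\<close>)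
  moreover have "\<exists>c. \<forall>x\<in>S. alph q v x = c"
    by (rule has_field_derivative_zero_constant[OF assms(2)])
       (use sol_derivs(2)[OF assms(1)] in \<open>blast intro: has_field_derivative_at_within\<close>)
  moreover have "\<exists>c. \<forall>x\<in>S. bet q v x = c"
    by (rule has_field_derivative_zero_constant[OF assms(2)])
       (use sol_derivs(3)[OF assms(1)] in \<open>blast intro: has_field_derivative_at_within\<close>)
  ultimately show ?thesis using assms(3,4) by metis
qed

lemma sol_identity:
  assumes "q t \<noteq> 0"
  shows "norm (q t) = alph q v t * fst (q t) + bet q v t * snd (q t) + (ang q v t)^2"
proof -
  define r where "r = norm (q t)"
  have r0: "r > 0" using assms by (simp add: r_def)
  have r2: "(fst (q t))^2 + (snd (q t))^2 = r^2" unfolding r_def by (rule norm_sq[symmetric])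
  have "alph q v t * fst (q t) + bet q v t * snd (q t)
      = ((fst (q t))^2 + (snd (q t))^2) / r - (ang q v t)^2"
    unfolding alph_def bet_def r_def[symmetric] by (simp add: ang_def algebra_simps power2_eq_square add_divide_distrib)
  also have "\<dots> = r - (ang q v t)^2" unfolding r2 using r0 by (simp add: power2_eq_square)
  finally show ?thesis unfolding r_def by simp
qed



lemma dir_deriv:
  assumes "ksol q v S" "t \<in> S"
  shows "((\<lambda>s. fst (q s) / norm (q s)) has_real_derivative
           - (snd (q t) / norm (q t)) * (ang q v t / (norm (q t))^2)) (at t)"
    and "((\<lambda>s. snd (q s) / norm (q s)) has_real_derivative
           (fst (q t) / norm (q t)) * (ang q v t / (norm (q t))^2)) (at t)"
proof -
  have nz: "q t \<noteq> 0" and dq: "(q has_vector_derivative v t) (at t)"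
    using assms by (auto simp: ksol_def)
  define r where "r = norm (q t)"
  have r0: "r > 0" using nz by (simp add: r_def)
  note x = comp_deriv(1)[OF dq] and y = comp_deriv(2)[OF dq]
  note nd = norm_deriv[OF dq nz]
  have r2: "r^2 = (fst (q t))^2 + (snd (q t))^2" unfolding r_def by (rule norm_sq)
  have "((\<lambda>s. fst (q s) / norm (q s)) has_real_derivative
     (fst (v t) * r - fst (q t) * ((fst (q t) * fst (v t) + snd (q t) * snd (v t)) / r)) / (r * r)) (at t)"
    unfolding r_def by (rule derivative_eq_intros x nd refl | use nz in simp)+
  moreover have "(fst (v t) * r - fst (q t) * ((fst (q t) * fst (v t) + snd (q t) * snd (v t)) / r)) / (r * r)
     = - (snd (q t) / r) * (ang q v t / r^2)"
  proof -
    have "fst (v t) * r - fst (q t) * ((fst (q t) * fst (v t) + snd (q t) * snd (v t)) / r)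
        = (fst (v t) * r^2 - fst (q t) * (fst (q t) * fst (v t) + snd (q t) * snd (v t))) / r"
      using r0 by (simp add: field_simps power2_eq_square)
    also have "\<dots> = - snd (q t) * ang q v t / r" unfolding r2 ang_def
      by (simp add: algebra_simps power2_eq_square)
    finally have E: "fst (v t) * r - fst (q t) * ((fst (q t) * fst (v t) + snd (q t) * snd (v t)) / r) = - snd (q t) * ang q v t / r" .
    show ?thesis unfolding E using r0 by (simp add: field_simps power2_eq_square)
  qed
  ultimately show "((\<lambda>s. fst (q s) / norm (q s)) has_real_derivative
           - (snd (q t) / norm (q t)) * (ang q v t / (norm (q t))^2)) (at t)" unfolding r_def by simp
  have "((\<lambda>s. snd (q s) / norm (q s)) has_real_derivative
     (snd (v t) * r - snd (q t) * ((fst (q t) * fst (v t) + snd (q t) * snd (v t)) / r)) / (r * r)) (at t)"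
    unfolding r_def by (rule derivative_eq_intros y nd refl | use nz in simp)+
  moreover have "(snd (v t) * r - snd (q t) * ((fst (q t) * fst (v t) + snd (q t) * snd (v t)) / r)) / (r * r)
     = (fst (q t) / r) * (ang q v t / r^2)"
  proof -
    have "snd (v t) * r - snd (q t) * ((fst (q t) * fst (v t) + snd (q t) * snd (v t)) / r)
        = (snd (v t) * r^2 - snd (q t) * (fst (q t) * fst (v t) + snd (q t) * snd (v t))) / r"
      using r0 by (simp add: field_simps power2_eq_square)
    also have "\<dots> = fst (q t) * ang q v t / r" unfolding r2 ang_def
      by (simp add: algebra_simps power2_eq_square)
    finally have E: "snd (v t) * r - snd (q t) * ((fst (q t) * fst (v t) + snd (q t) * snd (v t)) / r) = fst (q t) * ang q v t / r" .
    show ?thesis unfolding E using r0 by (simp add: field_simps power2_eq_square)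
  qed
  ultimately show "((\<lambda>s. snd (q s) / norm (q s)) has_real_derivative
           (fst (q t) / norm (q t)) * (ang q v t / (norm (q t))^2)) (at t)" unfolding r_def by simp
qed

lemma stay:
  fixes \<Theta> :: "real \<Rightarrow> real"
  assumes e0: "e \<ge> 0" and c: "continuous_on UNIV \<Theta>" and ec: "\<And>t. e * cos (\<Theta> t - \<phi>0) < 1"
    and t0: "\<Theta> 0 \<in> Iset e \<phi>0"
  shows "\<Theta> t \<in> Iset e \<phi>0"
proof (cases "e < 1")
  case True then show ?thesis by (simp add: Iset_def Jset_def)
next
  case False
  then have e1: "e \<ge> 1" by simp
  note af = arc_facts[OF e1]
  define a where "a = arccos (1/e)"
  have I: "Iset e \<phi>0 = {a + \<phi>0<..<2*pi - a + \<phi>0}" using False unfolding a_def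
    by (auto simp: Iset_def Jset_def)
  have ii: "is_interval (range \<Theta>)"
  proof -
    have "connected (range \<Theta>)" by (rule connected_continuous_image[OF c]) simp
    then show ?thesis using is_interval_connected_1 by blast
  qed
  have bad: "e * cos (z - \<phi>0) = 1" if "z = a + \<phi>0 \<or> z = 2*pi - a + \<phi>0" for z
    using that af unfolding a_def by auto
  have notin: "z \<notin> range \<Theta>" if "z = a + \<phi>0 \<or> z = 2*pi - a + \<phi>0" for z
    using bad[OF that] ec by (metis less_irrefl rangeE)
  show ?thesis
  proof (rule ccontr)
    assume "\<Theta> t \<notin> Iset e \<phi>0"
    then have "\<Theta> t \<le> a + \<phi>0 \<or> \<Theta> t \<ge> 2*pi - a + \<phi>0" using I by auto
    moreover have "a + \<phi>0 < \<Theta> 0" "\<Theta> 0 < 2*pi - a + \<phi>0" using t0 I by auto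
    ultimately obtain z where z: "z = a + \<phi>0 \<or> z = 2*pi - a + \<phi>0"
       "min (\<Theta> t) (\<Theta> 0) \<le> z" "z \<le> max (\<Theta> t) (\<Theta> 0)" by fastforce
    have "z \<in> range \<Theta>"
      using ii z unfolding is_interval_1 by (metis rangeI min_def max_def)
    then show False using notin[OF z(1)] by simp
  qed
qed


lemma ksol_cont: "ksol q v UNIV \<Longrightarrow> continuous_on UNIV q"
  unfolding ksol_def
  by (intro continuous_at_imp_continuous_on ballI) (meson has_vector_derivative_continuous UNIV_I)

lemma cover:
  assumes ks: "ksol q v UNIV" and C0: "ang q v 0 > 0"
  shows "unifocal (alph q v 0, bet q v 0, (ang q v 0)^2) \<subseteq> range q"
proof -
  define C where "C = ang q v 0"
  define A where "A = alph q v 0"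
  define B where "B = bet q v 0"
  define g where "g = C^2"
  have g0: "g > 0" using C0 unfolding g_def C_def by simp
  have sg: "sqrt g = C" using C0 unfolding g_def C_def by simp
  have cst: "ang q v t = C \<and> alph q v t = A \<and> bet q v t = B" for t
    unfolding C_def A_def B_def using sol_const[OF ks convex_UNIV] by blast
  obtain e \<phi>0 where ep: "e \<ge> 0" "0 \<le> \<phi>0" "\<phi>0 < 2*pi" "A = e * cos \<phi>0" "B = e * sin \<phi>0"
    using polar_params by blast
  let ?I = "Iset e \<phi>0"
  let ?P = "(e * cos \<phi>0, e * sin \<phi>0, g)"
  have nz: "q t \<noteq> 0" for t using ks by (simp add: ksol_def)
  have idt: "norm (q t) = A * fst (q t) + B * snd (q t) + g" for t
    using sol_identity[of q t v, OF nz[of t]] cst[of t] unfolding g_def by simp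
  have qP: "q t \<in> unifocal ?P" for t
  proof -
    have "sqrt ((fst (q t))^2 + (snd (q t))^2) = norm (q t)" by (simp add: norm_xy)
    then show ?thesis using idt[of t] ep(4,5) by (cases "q t") (simp add: unifocal_iff)
  qed
  obtain \<tau> where \<tau>: "\<forall>\<theta>\<in>?I. (\<tau> has_real_derivative tf e \<phi>0 g \<theta>) (at \<theta>)"
    "inj_on \<tau> ?I" "\<tau> ` ?I = UNIV"
    using tau_exists[OF ep(1) g0] by blast
  obtain \<theta>0 where th0: "\<theta>0 \<in> ?I" "fst (q 0) = rho e \<phi>0 g \<theta>0 * cos \<theta>0" "snd (q 0) = rho e \<phi>0 g \<theta>0 * sin \<theta>0"
    using rep[OF ep(1) g0 ep(2,3), of "fst (q 0)" "snd (q 0)"] qP[of 0] by auto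
  have cq: "continuous_on UNIV q" by (rule ksol_cont[OF ks])
  define h where "h t = C / (norm (q t))^2" for t
  have hc: "isCont h t" for t
    unfolding h_def using nz[of t] cq
    by (auto intro!: continuous_intros simp: continuous_on_eq_continuous_at)
  obtain F where F: "\<And>x::real. (F has_vector_derivative h x) (at x)"
    using einterval_antiderivative[of "-\<infinity>" "\<infinity>" h] hc by auto
  define \<Theta> where "\<Theta> t = F t - F 0 + \<theta>0" for t
  have dT: "(\<Theta> has_real_derivative h t) (at t)" for t
    unfolding \<Theta>_def[abs_def] using F[of t]
    by (auto intro!: derivative_eq_intros simp: has_real_derivative_iff_has_vector_derivative[symmetric])
  have T0: "\<Theta> 0 = \<theta>0" by (simp add: \<Theta>_def)
  define a where "a t = fst (q t) / norm (q t)" for t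
  define b where "b t = snd (q t) / norm (q t)" for t
  have da: "(a has_real_derivative - b t * h t) (at t)" for t
    using dir_deriv(1)[OF ks UNIV_I, of t] cst[of t] unfolding a_def[abs_def] b_def h_def by simp
  have db: "(b has_real_derivative a t * h t) (at t)" for t
    using dir_deriv(2)[OF ks UNIV_I, of t] cst[of t] unfolding a_def b_def[abs_def] h_def by simp
  define m where "m t = - sin (\<Theta> t) * a t + cos (\<Theta> t) * b t" for t
  define n where "n t = cos (\<Theta> t) * a t + sin (\<Theta> t) * b t" for t
  have dm: "(m has_field_derivative 0) (at t within UNIV)" for t
  proof -
    have "(m has_real_derivative
       - (cos (\<Theta> t) * h t) * a t + - sin (\<Theta> t) * (- b t * h t)
       + ((- sin (\<Theta> t) * h t) * b t + cos (\<Theta> t) * (a t * h t))) (at t)"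
      unfolding m_def[abs_def] by (rule derivative_eq_intros dT da db refl | simp)+
    then show ?thesis by (simp add: algebra_simps)
  qed
  have dn: "(n has_field_derivative 0) (at t within UNIV)" for t
  proof -
    have "(n has_real_derivative
       (- sin (\<Theta> t) * h t) * a t + cos (\<Theta> t) * (- b t * h t)
       + ((cos (\<Theta> t) * h t) * b t + sin (\<Theta> t) * (a t * h t))) (at t)"
      unfolding n_def[abs_def] by (rule derivative_eq_intros dT da db refl | simp)+
    then show ?thesis by (simp add: algebra_simps)
  qed
  obtain cm where cm: "\<And>t. m t = cm"
    using has_field_derivative_zero_constant[OF convex_UNIV dm] by blast
  obtain cn where cn: "\<And>t. n t = cn"
    using has_field_derivative_zero_constant[OF convex_UNIV dn] by blast
  have r00: "rho e \<phi>0 g \<theta>0 > 0" using rho_pos[OF ep(1) g0 th0(1)] .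
  have nq0: "norm (q 0) = rho e \<phi>0 g \<theta>0"
    using norm_polar[of "rho e \<phi>0 g \<theta>0" \<theta>0] r00 th0 by (cases "q 0") simp
  have a0: "a 0 = cos \<theta>0" "b 0 = sin \<theta>0" unfolding a_def b_def nq0 using th0 r00 by auto
  have "cm = 0" "cn = 1" using cm[of 0] cn[of 0] unfolding m_def n_def T0 a0
    by (auto simp: algebra_simps power2_eq_square[symmetric])
  then have mn: "m t = 0" "n t = 1" for t using cm cn by auto
  have ab: "a t = cos (\<Theta> t) \<and> b t = sin (\<Theta> t)" for t
  proof -
    have "a t = cos (\<Theta> t) * n t - sin (\<Theta> t) * m t"
      unfolding m_def n_def by (simp add: algebra_simps power2_eq_square[symmetric]
          flip: distrib_left)
    moreover have "b t = sin (\<Theta> t) * n t + cos (\<Theta> t) * m t"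
      unfolding m_def n_def by (simp add: algebra_simps power2_eq_square[symmetric]
          flip: distrib_left)
    ultimately show ?thesis using mn by simp
  qed
  have qpol: "q t = (norm (q t) * cos (\<Theta> t), norm (q t) * sin (\<Theta> t))" for t
    using ab[of t] nz[of t] unfolding a_def b_def by (cases "q t") (auto simp: field_simps)
  have rD: "norm (q t) * Dfn e \<phi>0 (\<Theta> t) = g" for t
  proof -
    have "norm (q t) = A * (norm (q t) * cos (\<Theta> t)) + B * (norm (q t) * sin (\<Theta> t)) + g"
      using idt[of t] qpol[of t] by (metis fst_conv snd_conv)
    then show ?thesis unfolding Dfn_alt ep(4,5)[symmetric] by (simp add: algebra_simps)
  qed
  have Dp: "Dfn e \<phi>0 (\<Theta> t) > 0" for t
  proof (rule zero_less_mult_pos)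
    show "0 < norm (q t) * Dfn e \<phi>0 (\<Theta> t)" using rD[of t] g0 by simp
    show "0 < norm (q t)" using nz[of t] by simp
  qed
  have rr: "norm (q t) = rho e \<phi>0 g (\<Theta> t)" for t
    using rD[of t] Dp[of t] by (simp add: rho_def field_simps)
  have cT: "continuous_on UNIV \<Theta>"
    using dT by (intro continuous_at_imp_continuous_on ballI) (meson DERIV_isCont)
  have TI: "\<Theta> t \<in> ?I" for t
    by (rule stay[OF ep(1) cT]) (use Dp T0 th0(1) in \<open>auto simp: Dfn_def\<close>)
  have dtT: "((\<lambda>t. \<tau> (\<Theta> t)) has_real_derivative 1) (at t)" for t
  proof -
    have "((\<lambda>t. \<tau> (\<Theta> t)) has_real_derivative tf e \<phi>0 g (\<Theta> t) * h t) (at t)"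
      by (rule DERIV_chain2[OF \<tau>(1)[rule_format, OF TI] dT])
    moreover have "tf e \<phi>0 g (\<Theta> t) * h t = 1"
    proof -
      have n0: "norm (q t) \<noteq> 0" using nz[of t] by simp
      have c0: "C \<noteq> 0" using C0 unfolding C_def by simp
      have "tf e \<phi>0 g (\<Theta> t) * h t = (norm (q t))^2 / C * (C / (norm (q t))^2)"
        unfolding tf_def h_def sg rr[of t] ..
      also have "\<dots> = 1" using n0 c0 by simp
      finally show ?thesis .
    qed
    ultimately show ?thesis by simp
  qed
  have dk: "((\<lambda>t. \<tau> (\<Theta> t) - t) has_field_derivative 0) (at t within UNIV)" for t
    using DERIV_diff[OF dtT[of t] DERIV_ident] by (simp add: has_field_derivative_at_within)
  obtain k where k: "\<And>t. \<tau> (\<Theta> t) - t = k"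
    using has_field_derivative_zero_constant[OF convex_UNIV dk] by blast
  show ?thesis
  proof
    fix p assume p: "p \<in> unifocal (alph q v 0, bet q v 0, (ang q v 0)^2)"
    obtain x y where pxy: "p = (x, y)" by (cases p)
    have "p \<in> unifocal ?P" using p ep(4,5) unfolding A_def B_def g_def C_def by simp
    then obtain \<theta> where th: "\<theta> \<in> ?I" "x = rho e \<phi>0 g \<theta> * cos \<theta>" "y = rho e \<phi>0 g \<theta> * sin \<theta>"
      using rep[OF ep(1) g0 ep(2,3)] pxy by blast
    define t where "t = \<tau> \<theta> - k"
    have "\<tau> (\<Theta> t) = \<tau> \<theta>" using k[of t] unfolding t_def by simp
    then have "\<Theta> t = \<theta>" using inj_onD[OF \<tau>(2) _ TI[of t] th(1)] by blast
    then have "q t = p" using qpol[of t] rr[of t] th pxy by simp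
    then show "p \<in> range q" by (metis rangeI)
  qed
qed



lemma sgn_pair: "sgn p = (fst p / norm p, snd p / norm p)" for p :: "real \<times> real"
  by (cases p) (simp add: sgn_div_norm divide_inverse mult.commute)

lemma dir_const_gen:
  assumes ks: "ksol q v S" and cv: "convex S" and F: "F \<noteq> bot" "eventually (\<lambda>s. s \<in> S) F"
    and lim: "(q \<longlongrightarrow> 0) F"
  shows "\<exists>w. \<forall>s\<in>S. sgn (q s) = w"
proof -
  obtain s0 where s0: "s0 \<in> S" using F eventually_happens' by blast
  define C where "C = ang q v s0"
  define A where "A = alph q v s0"
  define B where "B = bet q v s0"
  have cst: "ang q v s = C \<and> alph q v s = A \<and> bet q v s = B" if "s \<in> S" for s
    unfolding C_def A_def B_def using sol_const[OF ks cv that s0] by blast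
  have nz: "q s \<noteq> 0" if "s \<in> S" for s using ks that by (simp add: ksol_def)
  define hf where "hf s = norm (q s) - A * fst (q s) - B * snd (q s)" for s
  have hS: "hf s = C^2" if "s \<in> S" for s
    using sol_identity[of q s v, OF nz[OF that]] cst[OF that] unfolding hf_def by simp
  have l1: "(hf \<longlongrightarrow> C^2) F"
    by (rule Lim_transform_eventually[OF tendsto_const]) (use F(2) hS in \<open>auto elim: eventually_mono\<close>)
  have l2: "(hf \<longlongrightarrow> norm (0::real\<times>real) - A * fst (0::real\<times>real) - B * snd (0::real\<times>real)) F"
    unfolding hf_def[abs_def] by (intro tendsto_intros lim)
  have "C^2 = 0" using tendsto_unique[OF F(1) l1 l2] by simp
  then have C0: "C = 0" by simp
  have "sgn (q s) = (A, B)" if "s \<in> S" for s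
    using cst[OF that] C0 unfolding sgn_pair alph_def bet_def by auto
  then show ?thesis by blast
qed

lemma es_parts:
  assumes "ext_solution q"
  shows "continuous_on UNIV q" "\<And>a b. finite {t \<in> {a..b}. q t = 0}"
    "\<exists>v. \<forall>S. (\<forall>t\<in>S. q t \<noteq> 0) \<longrightarrow> ksol q v S"
    "\<And>t0. q t0 = 0 \<Longrightarrow> \<exists>e>0. \<forall>s. 0 < s \<and> s < e \<longrightarrow>
                 q (t0 + s) \<noteq> 0 \<and> q (t0 - s) \<noteq> 0 \<and> (\<exists>c>0. q (t0 + s) = c *\<^sub>R q (t0 - s))"
proof -
  note E = assms[unfolded ext_solution_def]
  show c: "continuous_on UNIV q" using E by (rule conjunct1)
  show f: "\<And>a b. finite {t \<in> {a..b}. q t = 0}" using E[THEN conjunct2, THEN conjunct1] by blast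
  obtain v where VB: "(\<forall>t. q t \<noteq> 0 \<longrightarrow> (q has_vector_derivative v t) (at t) \<and>
              (v has_vector_derivative (- (1 / norm (q t) ^ 3)) *\<^sub>R q t) (at t)) \<and>
    (\<forall>t0. q t0 = 0 \<longrightarrow>
              (\<exists>e>0. \<forall>s. 0 < s \<and> s < e \<longrightarrow>
                 q (t0 + s) \<noteq> 0 \<and> q (t0 - s) \<noteq> 0 \<and>
                 (\<exists>c>0. q (t0 + s) = c *\<^sub>R q (t0 - s)) \<and>
                 kep_energy (q (t0 + s)) (v (t0 + s)) = kep_energy (q (t0 - s)) (v (t0 - s))))"
    using E[THEN conjunct2, THEN conjunct2] by (rule exE)
  note V = VB[THEN conjunct1] and B = VB[THEN conjunct2]
  show "\<exists>v. \<forall>S. (\<forall>t\<in>S. q t \<noteq> 0) \<longrightarrow> ksol q v S"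
    by (rule exI[of _ v]) (use V in \<open>auto simp: ksol_def\<close>)
  fix t0 assume "q t0 = 0"
  then obtain e where "e > 0" "\<forall>s. 0 < s \<and> s < e \<longrightarrow>
                 q (t0 + s) \<noteq> 0 \<and> q (t0 - s) \<noteq> 0 \<and>
                 (\<exists>c>0. q (t0 + s) = c *\<^sub>R q (t0 - s)) \<and>
                 kep_energy (q (t0 + s)) (v (t0 + s)) = kep_energy (q (t0 - s)) (v (t0 - s))"
    using B by auto
  then show "\<exists>e>0. \<forall>s. 0 < s \<and> s < e \<longrightarrow>
                 q (t0 + s) \<noteq> 0 \<and> q (t0 - s) \<noteq> 0 \<and> (\<exists>c>0. q (t0 + s) = c *\<^sub>R q (t0 - s))" by blast
qed

lemma nonzero_near:
  fixes q :: "real \<Rightarrow> real \<times> real"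
  assumes "\<And>a b. finite {t \<in> {a..b}. q t = 0}" "e > 0"
  shows "\<exists>s. \<bar>s - t\<bar> < e \<and> q s \<noteq> (0::real\<times>real)"
proof -
  have "infinite {t - e/2..t + e/2}" using assms(2) by (intro infinite_Icc) simp
  then have "\<not> {t - e/2..t + e/2} \<subseteq> {s \<in> {t - e/2..t + e/2}. q s = 0}"
    using assms(1) finite_subset by blast
  then obtain s where "s \<in> {t - e/2..t + e/2}" "q s \<noteq> 0" by blast
  then show ?thesis using assms(2) by (intro exI[of _ s]) auto
qed


lemma sgn_pos_scale: "c > 0 \<Longrightarrow> sgn (c *\<^sub>R p) = sgn p" for p :: "real \<times> real"
  by (simp add: sgn_scaleR)

lemma loc:
  assumes es: "ext_solution q" and col: "q t0 = 0"
  shows "\<exists>e>0. \<exists>w. \<forall>s. \<bar>s - t\<bar> < e \<and> q s \<noteq> 0 \<longrightarrow> sgn (q s) = w"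
proof -
  note cq = es_parts(1)[OF es] and fin = es_parts(2)[OF es] and bn = es_parts(4)[OF es]
  obtain v where kv: "\<forall>S. (\<forall>t\<in>S. q t \<noteq> 0) \<longrightarrow> ksol q v S" using es_parts(3)[OF es] by (rule exE)
  have ks: "ksol q v S" if "\<And>t. t \<in> S \<Longrightarrow> q t \<noteq> 0" for S using kv that by blast
  have ic: "isCont q x" for x using cq by (simp add: continuous_on_eq_continuous_at)
  have limq: "(q \<longlongrightarrow> 0) (at x within X)" if "q x = 0" for x X
    using ic[of x] that by (metis continuous_at_imp_continuous_at_within continuous_within)
  have right: "\<exists>w. \<forall>s\<in>{c<..<d}. sgn (q s) = w"
    if "c < d" "q c = 0" "\<And>s. s \<in> {c<..<d} \<Longrightarrow> q s \<noteq> 0" for c d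
    by (rule dir_const_gen[OF ks[OF that(3)] convex_real_interval(8)])
       (use that eventually_at_right_real limq in auto)
  have left: "\<exists>w. \<forall>s\<in>{c<..<d}. sgn (q s) = w"
    if "c < d" "q d = 0" "\<And>s. s \<in> {c<..<d} \<Longrightarrow> q s \<noteq> 0" for c d
    by (rule dir_const_gen[OF ks[OF that(3)] convex_real_interval(8)])
       (use that eventually_at_left_real limq in auto)
  show ?thesis
  proof (cases "q t = 0")
    case False
    obtain \<delta> where \<delta>: "\<delta> > 0" "\<And>y. dist t y < \<delta> \<Longrightarrow> q y \<noteq> 0"
      using continuous_at_avoid[OF ic False] by blast
    have d\<delta>: "\<bar>s - t\<bar> < \<delta> \<Longrightarrow> q s \<noteq> 0" for s using \<delta>(2)[of s] by (simp add: dist_real_def abs_minus_commute)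
    have tt0: "t \<noteq> t0" using False col by auto
    show ?thesis
    proof (cases "t0 < t")
      case True
      define Z where "Z = {s \<in> {t0..t}. q s = 0}"
      have Zf: "finite Z" "t0 \<in> Z" unfolding Z_def using fin col True by auto
      define c where "c = Max Z"
      have cZ: "c \<in> Z" "\<And>s. s \<in> Z \<Longrightarrow> s \<le> c" unfolding c_def using Zf
        by (auto intro!: Max_in Max_ge)
      have ct: "c < t" "q c = 0" using cZ(1) False unfolding Z_def by (auto simp: order.order_iff_strict)
      have nzS: "q s \<noteq> 0" if "s \<in> {c<..<t + \<delta>}" for s
      proof (cases "s \<le> t")
        case True
        then show ?thesis using that cZ(2)[of s] cZ(1) unfolding Z_def by force
      next
        case False then show ?thesis using that d\<delta>[of s] by auto
      qed
      obtain w where w: "\<forall>s\<in>{c<..<t + \<delta>}. sgn (q s) = w"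
        using right[of c "t + \<delta>"] ct nzS \<delta>(1) by auto
      show ?thesis
      proof (intro exI[of _ "min (t - c) \<delta>"] conjI exI[of _ w] allI impI)
        show "0 < min (t - c) \<delta>" using ct \<delta> by simp
        fix s assume "\<bar>s - t\<bar> < min (t - c) \<delta> \<and> q s \<noteq> 0"
        then show "sgn (q s) = w" using w by (auto simp: abs_less_iff)
      qed
    next
      case False
      then have tl: "t < t0" using tt0 by auto
      define Z where "Z = {s \<in> {t..t0}. q s = 0}"
      have Zf: "finite Z" "t0 \<in> Z" unfolding Z_def using fin col tl by auto
      define c where "c = Min Z"
      have cZ: "c \<in> Z" "\<And>s. s \<in> Z \<Longrightarrow> c \<le> s" unfolding c_def using Zf
        by (auto intro!: Min_in Min_le)
      have ct: "t < c" "q c = 0" using cZ(1) \<open>q t \<noteq> 0\<close> unfolding Z_def by (auto simp: order.order_iff_strict)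
      have nzS: "q s \<noteq> 0" if "s \<in> {t - \<delta><..<c}" for s
      proof (cases "t \<le> s")
        case True
        then show ?thesis using that cZ(2)[of s] cZ(1) unfolding Z_def by force
      next
        case False then show ?thesis using that d\<delta>[of s] by auto
      qed
      obtain w where w: "\<forall>s\<in>{t - \<delta><..<c}. sgn (q s) = w"
        using left[of "t - \<delta>" c] ct nzS \<delta>(1) by auto
      show ?thesis
      proof (intro exI[of _ "min (c - t) \<delta>"] conjI exI[of _ w] allI impI)
        show "0 < min (c - t) \<delta>" using ct \<delta> by simp
        fix s assume "\<bar>s - t\<bar> < min (c - t) \<delta> \<and> q s \<noteq> 0"
        then show "sgn (q s) = w" using w by (auto simp: abs_less_iff)
      qed
    qed
  next
    case True
    obtain e where e: "e > 0" "\<And>s. 0 < s \<Longrightarrow> s < e \<Longrightarrow> q (t + s) \<noteq> 0 \<and> q (t - s) \<noteq> 0 \<and> (\<exists>c>0. q (t + s) = c *\<^sub>R q (t - s))"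
      using bn[OF True] by blast
    have nz1: "q s \<noteq> 0" if "s \<in> {t<..<t + e}" for s using e(2)[of "s - t"] that by auto
    have nz2: "q s \<noteq> 0" if "s \<in> {t - e<..<t}" for s using e(2)[of "t - s"] that by auto
    obtain w1 where w1: "\<forall>s\<in>{t<..<t + e}. sgn (q s) = w1"
      using right[of t "t + e"] True nz1 e(1) by auto
    obtain w2 where w2: "\<forall>s\<in>{t - e<..<t}. sgn (q s) = w2"
      using left[of "t - e" t] True nz2 e(1) by auto
    obtain k where k: "k > 0" "q (t + e/2) = k *\<^sub>R q (t - e/2)" using e(2)[of "e/2"] e(1) by auto
    have "w1 = w2"
      using w1[rule_format, of "t + e/2"] w2[rule_format, of "t - e/2"] e(1) k sgn_pos_scale[OF k(1)] by auto
    show ?thesis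
    proof (rule exI[of _ e], intro conjI e(1) exI[of _ w1] allI impI)
      fix s assume s: "\<bar>s - t\<bar> < e \<and> q s \<noteq> 0"
      then have "s \<noteq> t" using True by auto
      then show "sgn (q s) = w1" using s w1 w2 \<open>w1 = w2\<close> by (auto simp: abs_less_iff)
    qed
  qed
qed


lemma collision_line:
  assumes es: "ext_solution q" and col: "q t0 = 0"
  shows "\<exists>u. u \<noteq> 0 \<and> range q \<subseteq> line2 0 u"
proof -
  note fin = es_parts(2)[OF es]
  obtain t1 where t1: "q t1 \<noteq> 0" using nonzero_near[OF fin, of 1 0] by auto
  define u0 where "u0 = sgn (q t1)"
  have u0: "u0 \<noteq> 0" unfolding u0_def using t1 by (simp add: sgn_zero_iff)
  define P where "P t \<longleftrightarrow> (\<exists>e>0. \<forall>s. \<bar>s - t\<bar> < e \<and> q s \<noteq> 0 \<longrightarrow> sgn (q s) = u0)" for t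
  have oA: "open {t. P t}"
    unfolding open_dist
  proof (intro ballI)
    fix t assume "t \<in> {t. P t}"
    then obtain e where e: "e > 0" "\<And>s. \<bar>s - t\<bar> < e \<and> q s \<noteq> 0 \<Longrightarrow> sgn (q s) = u0"
      unfolding P_def by blast
    show "\<exists>e>0. \<forall>y. dist y t < e \<longrightarrow> y \<in> {t. P t}"
    proof (intro exI[of _ e] conjI e(1) allI impI)
      fix y assume y: "dist y t < e"
      show "y \<in> {t. P t}" unfolding P_def mem_Collect_eq
        by (rule exI[of _ "e - dist y t"]) (use y e(2) in \<open>auto simp: dist_real_def\<close>)
    qed
  qed
  have oB: "open {t. \<not> P t}"
    unfolding open_dist
  proof (intro ballI)
    fix t assume "t \<in> {t. \<not> P t}"
    then have nP: "\<not> P t" by simp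
    obtain e w where e: "e > 0" "\<And>s. \<bar>s - t\<bar> < e \<and> q s \<noteq> 0 \<Longrightarrow> sgn (q s) = w"
      using loc[OF es col, of t] by blast
    have wu: "w \<noteq> u0" using nP e unfolding P_def by blast
    show "\<exists>e>0. \<forall>y. dist y t < e \<longrightarrow> y \<in> {t. \<not> P t}"
    proof (intro exI[of _ e] conjI e(1) allI impI)
      fix y assume y: "dist y t < e"
      show "y \<in> {t. \<not> P t}" unfolding mem_Collect_eq
      proof
        assume "P y"
        then obtain e' where e': "e' > 0" "\<And>s. \<bar>s - y\<bar> < e' \<and> q s \<noteq> 0 \<Longrightarrow> sgn (q s) = u0"
          unfolding P_def by blast
        have "min e' (e - dist y t) > 0" using e' y by simp
        then obtain s where s: "\<bar>s - y\<bar> < min e' (e - dist y t)" "q s \<noteq> 0"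
          using nonzero_near[OF fin] by blast
        have "sgn (q s) = u0" using e'(2)[of s] s by simp
        moreover have "sgn (q s) = w" using e(2)[of s] s y by (auto simp: dist_real_def)
        ultimately show False using wu by simp
      qed
    qed
  qed
  have Pt1: "P t1"
  proof -
    obtain e w where e: "e > 0" "\<And>s. \<bar>s - t1\<bar> < e \<and> q s \<noteq> 0 \<Longrightarrow> sgn (q s) = w"
      using loc[OF es col, of t1] by blast
    have "w = u0" using e(2)[of t1] e(1) t1 unfolding u0_def by simp
    then show ?thesis unfolding P_def using e by blast
  qed
  have "{t. P t} \<inter> UNIV = {} \<or> {t. \<not> P t} \<inter> UNIV = {}"
    by (rule connectedD[OF connected_UNIV oA oB]) auto
  then have allP: "P t" for t using Pt1 by auto
  have "q t \<in> line2 0 u0" for t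
  proof (cases "q t = 0")
    case True then show ?thesis unfolding line2_def by (intro CollectI exI[of _ 0]) simp
  next
    case False
    obtain e where e: "e > 0" "\<And>s. \<bar>s - t\<bar> < e \<and> q s \<noteq> 0 \<Longrightarrow> sgn (q s) = u0"
      using allP[of t] unfolding P_def by blast
    have "sgn (q t) = u0" using e False by simp
    moreover have "q t = norm (q t) *\<^sub>R sgn (q t)" using False by (simp add: sgn_div_norm)
    ultimately have "q t = norm (q t) *\<^sub>R u0" by simp
    then show ?thesis unfolding line2_def by (intro CollectI exI[of _ "norm (q t)"]) simp
  qed
  then show ?thesis using u0 by blast
qed



lemma ksol_reflect:
  assumes "ksol q v UNIV"
  shows "ksol (\<lambda>t. q (- t)) (\<lambda>t. - v (- t)) UNIV"
  unfolding ksol_def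
proof (intro ballI conjI)
  fix t :: real
  have nz: "q (- t) \<noteq> 0" and dq: "(q has_vector_derivative v (- t)) (at (- t))"
    and dv: "(v has_vector_derivative (- (1 / norm (q (- t)) ^ 3)) *\<^sub>R q (- t)) (at (- t))"
    using assms by (auto simp: ksol_def)
  show "q (- t) \<noteq> 0" by (rule nz)
  have m: "((\<lambda>t::real. - t) has_vector_derivative - 1) (at t)"
    by (auto intro!: derivative_eq_intros simp: has_real_derivative_iff_has_vector_derivative[symmetric])
  have "((q \<circ> (\<lambda>t. - t)) has_vector_derivative (- 1) *\<^sub>R v (- t)) (at t)"
    by (rule vector_diff_chain_at[OF m]) (simp add: dq)
  then show "((\<lambda>t. q (- t)) has_vector_derivative - v (- t)) (at t)" by (simp add: o_def)
  have "((v \<circ> (\<lambda>t. - t)) has_vector_derivative (- 1) *\<^sub>R ((- (1 / norm (q (- t)) ^ 3)) *\<^sub>R q (- t))) (at t)"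
    by (rule vector_diff_chain_at[OF m]) (use dv in simp)
  then have "((\<lambda>t. - (v \<circ> (\<lambda>t. - t)) t) has_vector_derivative - ((- 1) *\<^sub>R ((- (1 / norm (q (- t)) ^ 3)) *\<^sub>R q (- t)))) (at t)"
    by (rule has_vector_derivative_minus)
  then show "((\<lambda>t. - v (- t)) has_vector_derivative (- (1 / norm (q (- t)) ^ 3)) *\<^sub>R q (- t)) (at t)"
    by (simp add: o_def)
qed

lemma irr_unifocal:
  assumes "irreducible_branch K"
  shows "\<exists>P\<in>Hspace. unifocal P = K"
proof -
  obtain q where es: "ext_solution q" and Kq: "K = range q"
    using assms unfolding irreducible_branch_def kep_branch_def by blast
  have nl: "\<not> (\<exists>p u. u \<noteq> 0 \<and> K \<subseteq> line2 p u)"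
    using assms unfolding irreducible_branch_def by blast
  have nz: "q t \<noteq> 0" for t
  proof
    assume "q t = 0"
    then obtain u where "u \<noteq> 0" "range q \<subseteq> line2 0 u" using collision_line[OF es] by blast
    then show False using nl Kq by blast
  qed
  obtain v where kv: "\<forall>S. (\<forall>t\<in>S. q t \<noteq> 0) \<longrightarrow> ksol q v S" using es_parts(3)[OF es] by (rule exE)
  have ks: "ksol q v UNIV" using kv nz by blast
  define C where "C = ang q v 0"
  define A where "A = alph q v 0"
  define B where "B = bet q v 0"
  have cst: "ang q v t = C \<and> alph q v t = A \<and> bet q v t = B" for t
    unfolding C_def A_def B_def using sol_const[OF ks convex_UNIV] by blast
  have C0: "C \<noteq> 0"
  proof
    assume C0: "C = 0"
    have sg: "sgn (q t) = (A, B)" for t using cst[of t] C0 unfolding sgn_pair alph_def bet_def by auto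
    have "(A, B) \<noteq> 0" using sg[of 0] nz[of 0] by (metis sgn_zero_iff)
    moreover have "q t \<in> line2 0 (A, B)" for t
    proof -
      have "q t = norm (q t) *\<^sub>R sgn (q t)" using nz[of t] by (simp add: sgn_div_norm)
      then show ?thesis unfolding line2_def sg by (intro CollectI exI[of _ "norm (q t)"]) simp
    qed
    ultimately show False using nl Kq by blast
  qed
  have sub: "range q \<subseteq> unifocal (A, B, C^2)"
  proof
    fix p assume "p \<in> range q"
    then obtain t where t: "p = q t" by blast
    have "sqrt ((fst (q t))^2 + (snd (q t))^2) = norm (q t)" by (simp add: norm_xy)
    then show "p \<in> unifocal (A, B, C^2)"
      using sol_identity[of q t v, OF nz[of t]] cst[of t] t by (cases "q t") (simp add: unifocal_iff)
  qed
  have sup: "unifocal (A, B, C^2) \<subseteq> range q"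
  proof (cases "C > 0")
    case True
    then show ?thesis using cover[OF ks] unfolding C_def A_def B_def by simp
  next
    case False
    then have Cn: "C < 0" using C0 by simp
    let ?q = "\<lambda>t. q (- t)" and ?v = "\<lambda>t. - v (- t)"
    have ks': "ksol ?q ?v UNIV" by (rule ksol_reflect[OF ks])
    have a: "ang ?q ?v 0 = - C" unfolding C_def ang_def by simp
    have b: "alph ?q ?v 0 = A" "bet ?q ?v 0 = B" unfolding A_def B_def alph_def bet_def ang_def by (simp_all add: algebra_simps)
    have "unifocal (A, B, (- C)^2) \<subseteq> range ?q" using cover[OF ks'] a b Cn by simp
    moreover have "range ?q = range q" by (metis surj_def minus_minus image_image range_composition)
    ultimately show ?thesis by simp
  qed
  have "(A, B, C^2) \<in> Hspace" using C0 by (simp add: Hspace_def)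
  then show ?thesis using sub sup Kq by blast
qed



lemma line_alg:
  fixes g k s c p1 p2 t1 t2 t3 u1 u2 :: real
  assumes "g > 0" "k > 0" "s^2 + c^2 = 1"
    "- g * s = p1 + t1 * u1" "g * c = p2 + t1 * u2"
    "g * s = p1 + t3 * u1" "- g * c = p2 + t3 * u2"
    "- k * c = p1 + t2 * u1" "- k * s = p2 + t2 * u2"
  shows "u1 = 0 \<and> u2 = 0"
proof -
  have m1': "g * (c * u1 + s * u2) = 0" using assms(4-7) by algebra
  then have m1: "c * u1 + s * u2 = 0" using assms(1) by simp
  have m2': "k * (s * u1 - c * u2) = 0" using assms(4-9) m1 by algebra
  then have m2: "s * u1 - c * u2 = 0" using assms(2) by simp
  have "u1 = c * (c * u1 + s * u2) + s * (s * u1 - c * u2)" using assms(3) by algebra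
  also have "\<dots> = 0" unfolding m1 m2 by simp
  finally have A: "u1 = 0" .
  have "u2 = s * (c * u1 + s * u2) - c * (s * u1 - c * u2)" using assms(3) by algebra
  also have "\<dots> = 0" unfolding m1 m2 by simp
  finally have "u2 = 0" .
  then show ?thesis using A by simp
qed
lemma sqrt_sc: "s^2 + c^2 = 1 \<Longrightarrow> sqrt ((a * s)^2 + (a * c)^2) = \<bar>a\<bar>" for a s c :: real
proof -
  assume h: "s^2 + c^2 = 1"
  have "(a * s)^2 + (a * c)^2 = a^2 * (s^2 + c^2)" by (simp add: algebra_simps power2_eq_square)
  then show ?thesis using h by simp
qed

lemma three_points:
  assumes e0: "e \<ge> 0" and g0: "g > 0"
  shows "(- g * sin \<phi>0, g * cos \<phi>0) \<in> unifocal (e * cos \<phi>0, e * sin \<phi>0, g)"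
    and "(g * sin \<phi>0, - g * cos \<phi>0) \<in> unifocal (e * cos \<phi>0, e * sin \<phi>0, g)"
    and "(- (g/(1+e)) * cos \<phi>0, - (g/(1+e)) * sin \<phi>0) \<in> unifocal (e * cos \<phi>0, e * sin \<phi>0, g)"
proof -
  have n1: "sqrt ((- g * sin \<phi>0)^2 + (g * cos \<phi>0)^2) = g"
    using sqrt_sc[of "sin \<phi>0" "cos \<phi>0" g] g0 by (simp add: power_mult_distrib)
  show "(- g * sin \<phi>0, g * cos \<phi>0) \<in> unifocal (e * cos \<phi>0, e * sin \<phi>0, g)"
    unfolding unifocal_iff n1 by (simp add: algebra_simps)
  have n3: "sqrt ((g * sin \<phi>0)^2 + (- g * cos \<phi>0)^2) = g"
    using n1 by (simp add: power2_eq_square)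
  show "(g * sin \<phi>0, - g * cos \<phi>0) \<in> unifocal (e * cos \<phi>0, e * sin \<phi>0, g)"
    unfolding unifocal_iff n3 by (simp add: algebra_simps)
  have k0: "g/(1+e) > 0" using e0 g0 by simp
  have n2: "sqrt ((- (g/(1+e)) * cos \<phi>0)^2 + (- (g/(1+e)) * sin \<phi>0)^2) = g/(1+e)"
    using sqrt_sc[of "cos \<phi>0" "sin \<phi>0" "g/(1+e)"] k0 g0 e0 by (simp add: power_mult_distrib add.commute)
  have "g/(1+e) = e * cos \<phi>0 * (- (g/(1+e)) * cos \<phi>0) + e * sin \<phi>0 * (- (g/(1+e)) * sin \<phi>0) + g"
  proof -
    have "e * cos \<phi>0 * (- (g/(1+e)) * cos \<phi>0) + e * sin \<phi>0 * (- (g/(1+e)) * sin \<phi>0)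
        = - e * (g/(1+e)) * ((sin \<phi>0)^2 + (cos \<phi>0)^2)"
      by (simp add: algebra_simps power2_eq_square del: sin_cos_squared_add sin_cos_squared_add2 sin_cos_squared_add3)
    also have "\<dots> = - e * (g/(1+e))" by simp
    finally show ?thesis using e0 by (simp add: field_simps)
  qed
  then show "(- (g/(1+e)) * cos \<phi>0, - (g/(1+e)) * sin \<phi>0) \<in> unifocal (e * cos \<phi>0, e * sin \<phi>0, g)"
    unfolding unifocal_iff n2 .
qed

lemma unifocal_inj:
  assumes "P \<in> Hspace" "P' \<in> Hspace" "unifocal P = unifocal P'"
  shows "P = P'"
proof -
  obtain a b g where P: "P = (a, b, g)" by (cases P) auto
  obtain a' b' g' where P': "P' = (a', b', g')" by (cases P') auto
  have g0: "g > 0" using assms(1) P by (simp add: Hspace_def)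
  obtain e \<phi>0 where ep: "e \<ge> 0" "0 \<le> \<phi>0" "\<phi>0 < 2*pi" "a = e * cos \<phi>0" "b = e * sin \<phi>0"
    using polar_params by blast
  let ?c = "cos \<phi>0" and ?s = "sin \<phi>0"
  have sc: "?s^2 + ?c^2 = 1" by simp
  note pts = three_points[OF ep(1) g0, of \<phi>0]
  have q1: "(- g * ?s, g * ?c) \<in> unifocal (a', b', g')" using pts(1) assms(3) P P' ep by simp
  have q3: "(g * ?s, - g * ?c) \<in> unifocal (a', b', g')" using pts(2) assms(3) P P' ep by simp
  have q2: "(- (g/(1+e)) * ?c, - (g/(1+e)) * ?s) \<in> unifocal (a', b', g')" using pts(3) assms(3) P P' ep by simp
  have n1: "sqrt ((- g * ?s)^2 + (g * ?c)^2) = g"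
    using sqrt_sc[of "sin \<phi>0" "cos \<phi>0" g] g0 by (simp add: power_mult_distrib)
  have n3: "sqrt ((g * ?s)^2 + (- g * ?c)^2) = g" using n1 by (simp add: power2_eq_square)
  have k0: "g/(1+e) > 0" using ep(1) g0 by simp
  have n2: "sqrt ((- (g/(1+e)) * ?c)^2 + (- (g/(1+e)) * ?s)^2) = g/(1+e)"
    using sqrt_sc[of "cos \<phi>0" "sin \<phi>0" "g/(1+e)"] k0 g0 ep(1) by (simp add: power_mult_distrib add.commute)
  have e1: "g = a' * (- g * ?s) + b' * (g * ?c) + g'" using q1 n1 by (simp add: unifocal_iff)
  have e3: "g = a' * (g * ?s) + b' * (- g * ?c) + g'" using q3 n3 by (simp add: unifocal_iff)
  have e2: "g/(1+e) = a' * (- (g/(1+e)) * ?c) + b' * (- (g/(1+e)) * ?s) + g'" using q2 n2 by (simp add: unifocal_iff)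
  have gg: "g' = g" using e1 e3 by (simp add: algebra_simps)
  have l1: "g * (- a' * ?s + b' * ?c) = 0" using e1 gg by algebra
  then have m1: "- a' * ?s + b' * ?c = 0" using g0 by simp
  define k where "k = g/(1+e)"
  have hk: "k * (1 + e) = g" unfolding k_def using ep(1) by simp
  have e2': "k = a' * (- k * ?c) + b' * (- k * ?s) + g'" unfolding k_def by (rule e2)
  have l2: "(g/(1+e)) * (a' * ?c + b' * ?s - e) = 0"
    unfolding k_def[symmetric] using e2' gg hk by algebra
  then have m2: "a' * ?c + b' * ?s = e" using k0 g0 ep(1) by simp
  have "a' = e * ?c" using m1 m2 sc by algebra
  moreover have "b' = e * ?s" using m1 m2 sc by algebra
  ultimately show ?thesis using P P' ep gg by simp
qed

lemma unifocal_not_line: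
  assumes "P \<in> Hspace" "u \<noteq> 0"
  shows "\<not> unifocal P \<subseteq> line2 p u"
proof
  assume sub: "unifocal P \<subseteq> line2 p u"
  obtain a b g where P: "P = (a, b, g)" by (cases P) auto
  have g0: "g > 0" using assms(1) P by (simp add: Hspace_def)
  obtain e \<phi>0 where ep: "e \<ge> 0" "0 \<le> \<phi>0" "\<phi>0 < 2*pi" "a = e * cos \<phi>0" "b = e * sin \<phi>0"
    using polar_params by blast
  let ?c = "cos \<phi>0" and ?s = "sin \<phi>0" and ?k = "g/(1+e)"
  note pts = three_points[OF ep(1) g0, of \<phi>0]
  have inl: "x \<in> unifocal (e * ?c, e * ?s, g) \<Longrightarrow> \<exists>t. x = p + t *\<^sub>R u" for x
    using sub P ep unfolding line2_def by auto
  obtain t1 where t1: "(- g * ?s, g * ?c) = p + t1 *\<^sub>R u" using inl[OF pts(1)] by blast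
  obtain t3 where t3: "(g * ?s, - g * ?c) = p + t3 *\<^sub>R u" using inl[OF pts(2)] by blast
  obtain t2 where t2: "(- ?k * ?c, - ?k * ?s) = p + t2 *\<^sub>R u" using inl[OF pts(3)] by blast
  obtain u1 u2 where u: "u = (u1, u2)" by (cases u)
  obtain p1 p2 where p: "p = (p1, p2)" by (cases p)
  have E: "- g * ?s = p1 + t1 * u1" "g * ?c = p2 + t1 * u2"
          "g * ?s = p1 + t3 * u1" "- g * ?c = p2 + t3 * u2"
          "- ?k * ?c = p1 + t2 * u1" "- ?k * ?s = p2 + t2 * u2"
    using t1 t3 t2 u p by auto
  have k0: "?k > 0" using ep(1) g0 by simp
  have "u1 = 0 \<and> u2 = 0" by (rule line_alg[OF g0 k0 _ E]) simp
  then show False using assms(2) u by (simp add: zero_prod_def)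
qed

lemma unifocal_irr:
  assumes "P \<in> Hspace"
  shows "unifocal P \<in> IrrBranches"
proof -
  obtain a b g where P: "P = (a, b, g)" by (cases P) auto
  have g0: "g > 0" using assms(1) P by (simp add: Hspace_def)
  obtain e \<phi>0 where ep: "e \<ge> 0" "0 \<le> \<phi>0" "\<phi>0 < 2*pi" "a = e * cos \<phi>0" "b = e * sin \<phi>0"
    using polar_params by blast
  obtain q where "ext_solution q" "range q = unifocal (e * cos \<phi>0, e * sin \<phi>0, g)"
    using exists_sol[OF ep(1) g0 ep(2,3)] by blast
  then have "kep_branch (unifocal P)" unfolding kep_branch_def using P ep by auto
  then show ?thesis using unifocal_not_line[OF assms]
    unfolding IrrBranches_def irreducible_branch_def by blast
qed

lemma bp_props:
  assumes "K \<in> IrrBranches"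
  shows "branch_params K \<in> Hspace \<and> unifocal (branch_params K) = K"
proof -
  obtain P where P: "P \<in> Hspace" "unifocal P = K"
    using irr_unifocal assms unfolding IrrBranches_def by blast
  have "\<exists>!P. P \<in> Hspace \<and> unifocal P = K"
    using P unifocal_inj by blast
  then show ?thesis unfolding branch_params_def by (rule theI')
qed

lemma bp_unifocal:
  assumes "P \<in> Hspace"
  shows "branch_params (unifocal P) = P"
  unfolding branch_params_def
  by (rule the_equality) (use assms unifocal_inj in auto)

lemma bij_part: "bij_betw branch_params IrrBranches Hspace"
  unfolding bij_betw_def
proof
  show "inj_on branch_params IrrBranches"
    by (rule inj_onI) (metis bp_props)
  show "branch_params ` IrrBranches = Hspace"
  proof
    show "branch_params ` IrrBranches \<subseteq> Hspace" using bp_props by blast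
    show "Hspace \<subseteq> branch_params ` IrrBranches"
    proof
      fix P assume "P \<in> Hspace"
      then show "P \<in> branch_params ` IrrBranches"
        using bp_unifocal unifocal_irr by (metis imageI)
    qed
  qed
qed

lemma image_cond:
  "branch_params ` {K \<in> IrrBranches. Q K} = {P \<in> Hspace. Q (unifocal P)}"
proof
  show "branch_params ` {K \<in> IrrBranches. Q K} \<subseteq> {P \<in> Hspace. Q (unifocal P)}"
    using bp_props by auto
  show "{P \<in> Hspace. Q (unifocal P)} \<subseteq> branch_params ` {K \<in> IrrBranches. Q K}"
  proof
    fix P assume P: "P \<in> {P \<in> Hspace. Q (unifocal P)}"
    then have "unifocal P \<in> {K \<in> IrrBranches. Q K}" using unifocal_irr by auto
    then show "P \<in> branch_params ` {K \<in> IrrBranches. Q K}" using bp_unifocal P by (metis imageI CollectD)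
  qed
qed



lemma inner3: "(a, b, c) \<bullet> (x, y, z) = a * x + b * y + c * z" for a b c x y z :: real
  by (simp add: inner_Pair)

lemma two_planes:
  fixes a1 a2 b1 b2 ra rb :: real
  assumes ne: "(a1, a2) \<noteq> (b1, b2)"
  shows "\<exists>P0. {P. (a1, a2, 1::real) \<bullet> P = ra \<and> (b1, b2, 1::real) \<bullet> P = rb}
              = line3 P0 (a2 - b2, b1 - a1, a1 * b2 - a2 * b1)"
proof -
  define V1 where "V1 = a2 - b2"
  define V2 where "V2 = b1 - a1"
  define V3 where "V3 = a1 * b2 - a2 * b1"
  define G11 where "G11 = a1^2 + a2^2 + 1"
  define G22 where "G22 = b1^2 + b2^2 + 1"
  define G12 where "G12 = a1 * b1 + a2 * b2 + 1"
  define dt where "dt = G11 * G22 - G12^2"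
  have dtV: "dt = V1^2 + V2^2 + V3^2"
    unfolding dt_def G11_def G22_def G12_def V1_def V2_def V3_def by algebra
  have "V1 \<noteq> 0 \<or> V2 \<noteq> 0" using ne unfolding V1_def V2_def by auto
  then have dt0: "dt > 0" unfolding dtV
    by (metis add_pos_nonneg sum_power2_gt_zero_iff zero_le_power2)
  define l where "l = (ra * G22 - rb * G12) / dt"
  define m where "m = (rb * G11 - ra * G12) / dt"
  define P0 where "P0 = (l * a1 + m * b1, l * a2 + m * b2, l + m)"
  have h1: "l * G11 + m * G12 = ra"
  proof -
    have e: "(ra * G22 - rb * G12) * G11 + (rb * G11 - ra * G12) * G12 = ra * dt" unfolding dt_def by algebra
    have "l * G11 + m * G12 = ((ra * G22 - rb * G12) * G11 + (rb * G11 - ra * G12) * G12) / dt" using dt0 unfolding l_def m_def by (simp add: field_simps)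
    then have "l * G11 + m * G12 = ra * dt / dt" unfolding e .
    then show ?thesis using dt0 by simp
  qed
  have h2: "l * G12 + m * G22 = rb"
  proof -
    have e: "(ra * G22 - rb * G12) * G12 + (rb * G11 - ra * G12) * G22 = rb * dt" unfolding dt_def by algebra
    have "l * G12 + m * G22 = ((ra * G22 - rb * G12) * G12 + (rb * G11 - ra * G12) * G22) / dt" using dt0 unfolding l_def m_def by (simp add: field_simps)
    then have "l * G12 + m * G22 = rb * dt / dt" unfolding e .
    then show ?thesis using dt0 by simp
  qed
  have P0a: "(a1, a2, 1::real) \<bullet> P0 = ra" unfolding P0_def inner3 using h1
    unfolding G11_def G12_def by (simp add: algebra_simps power2_eq_square)
  have P0b: "(b1, b2, 1::real) \<bullet> P0 = rb" unfolding P0_def inner3 using h2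
    unfolding G22_def G12_def by (simp add: algebra_simps power2_eq_square)
  have "{P. (a1, a2, 1::real) \<bullet> P = ra \<and> (b1, b2, 1::real) \<bullet> P = rb} = line3 P0 (V1, V2, V3)"
  proof (intro set_eqI iffI)
    fix P assume "P \<in> {P. (a1, a2, 1::real) \<bullet> P = ra \<and> (b1, b2, 1::real) \<bullet> P = rb}"
    then have Pa: "(a1, a2, 1::real) \<bullet> P = ra" and Pb: "(b1, b2, 1::real) \<bullet> P = rb" by auto
    obtain x y z :: real where P: "P = (x, y, z)" by (cases P) auto
    obtain x0 y0 z0 :: real where P0: "P0 = (x0, y0, z0)" by (cases P0) auto
    define w1 where "w1 = x - x0"
    define w2 where "w2 = y - y0"
    define w3 where "w3 = z - z0"
    have wa: "a1 * w1 + a2 * w2 + w3 = 0" using Pa P0a unfolding P P0 inner3 w1_def w2_def w3_def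
      by (simp add: algebra_simps)
    have wb: "b1 * w1 + b2 * w2 + w3 = 0" using Pb P0b unfolding P P0 inner3 w1_def w2_def w3_def
      by (simp add: algebra_simps)
    define t where "t = (w1 * V1 + w2 * V2 + w3 * V3) / dt"
    have i1: "dt * w1 = (w1 * V1 + w2 * V2 + w3 * V3) * V1"
      unfolding dtV V1_def V2_def V3_def using wa wb by algebra
    have i2: "dt * w2 = (w1 * V1 + w2 * V2 + w3 * V3) * V2"
      unfolding dtV V1_def V2_def V3_def using wa wb by algebra
    have i3: "dt * w3 = (w1 * V1 + w2 * V2 + w3 * V3) * V3"
      unfolding dtV V1_def V2_def V3_def using wa wb by algebra
    have "w1 = t * V1" "w2 = t * V2" "w3 = t * V3" unfolding t_def
      using i1 i2 i3 dt0 by (simp_all add: field_simps)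
    then have "P = P0 + t *\<^sub>R (V1, V2, V3)" unfolding P P0 w1_def w2_def w3_def by simp
    then show "P \<in> line3 P0 (V1, V2, V3)" unfolding line3_def by blast
  next
    fix P assume "P \<in> line3 P0 (V1, V2, V3)"
    then obtain t where P: "P = P0 + t *\<^sub>R (V1, V2, V3)" unfolding line3_def by blast
    obtain x0 y0 z0 :: real where P0: "P0 = (x0, y0, z0)" by (cases P0) auto
    have va: "a1 * V1 + a2 * V2 + V3 = 0" unfolding V1_def V2_def V3_def by algebra
    have vb: "b1 * V1 + b2 * V2 + V3 = 0" unfolding V1_def V2_def V3_def by algebra
    have "(a1, a2, 1::real) \<bullet> P = (a1, a2, 1::real) \<bullet> P0 + t * (a1 * V1 + a2 * V2 + V3)"
      unfolding P P0 inner3 by (simp add: algebra_simps)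
    moreover have "(b1, b2, 1::real) \<bullet> P = (b1, b2, 1::real) \<bullet> P0 + t * (b1 * V1 + b2 * V2 + V3)"
      unfolding P P0 inner3 by (simp add: algebra_simps)
    ultimately show "P \<in> {P. (a1, a2, 1::real) \<bullet> P = ra \<and> (b1, b2, 1::real) \<bullet> P = rb}"
      using va vb P0a P0b by simp
  qed
  then show ?thesis unfolding V1_def V2_def V3_def by blast
qed



lemma mem_unif: "A \<in> unifocal P \<longleftrightarrow> (fst A, snd A, 1::real) \<bullet> P = norm A"
proof -
  obtain a1 a2 where A: "A = (a1, a2)" by (cases A)
  obtain x y z where P: "P = (x, y, z)" by (cases P) auto
  show ?thesis unfolding A P unifocal_iff inner3 norm_xy by (auto simp: algebra_simps)
qed

lemma plane_part:
  assumes A0: "A \<noteq> 0"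
  shows "\<exists>n d. n \<noteq> 0 \<and>
            branch_params ` {K \<in> IrrBranches. A \<in> K} = Hspace \<inter> plane3 n d \<and>
            plane3 n d \<inter> Hboundary \<noteq> {} \<and> plane3 n d \<noteq> Hboundary"
proof (intro exI conjI)
  let ?n = "(fst A, snd A, 1::real)" and ?d = "norm A"
  show "?n \<noteq> 0" by (simp add: zero_prod_def)
  show "branch_params ` {K \<in> IrrBranches. A \<in> K} = Hspace \<inter> plane3 ?n ?d"
    unfolding image_cond plane3_def mem_unif by auto
  have r0: "norm A > 0" using A0 by simp
  have "(fst A / norm A, snd A / norm A, 0) \<in> plane3 ?n ?d \<inter> Hboundary"
  proof -
    have "?n \<bullet> (fst A / norm A, snd A / norm A, 0) = ((fst A)^2 + (snd A)^2) / norm A"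
      unfolding inner3 by (simp add: power2_eq_square add_divide_distrib)
    also have "\<dots> = (norm A)^2 / norm A" using norm_sq[of A] by simp
    also have "\<dots> = norm A" using r0 by (simp add: power2_eq_square)
    finally show ?thesis by (simp add: plane3_def Hboundary_def)
  qed
  then show "plane3 ?n ?d \<inter> Hboundary \<noteq> {}" by blast
  have "(0, 0, 0) \<in> Hboundary" "(0, 0, 0) \<notin> plane3 ?n ?d"
    using r0 by (auto simp: Hboundary_def plane3_def inner3)
  then show "plane3 ?n ?d \<noteq> Hboundary" by blast
qed

lemma nsr:
  assumes "\<not> same_ray A B"
  shows "A \<noteq> 0" "B \<noteq> 0" "A \<noteq> B"
proof -
  have r: "t *\<^sub>R u \<in> ray u" if "t \<ge> 0" for t u using that unfolding ray_def by blast
  have z: "0 \<in> ray u" for u using r[of 0 u] by simp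
  have uu: "u \<in> ray u" for u using r[of 1 u] by simp
  have u10: "(1::real, 0::real) \<noteq> 0" by (simp add: zero_prod_def)
  have sr: "same_ray A B" if "u \<noteq> 0" "A \<in> ray u" "B \<in> ray u" for u
    unfolding same_ray_def using that by blast
  show A0: "A \<noteq> 0"
  proof
    assume A: "A = 0"
    show False
    proof (cases "B = 0")
      case True
      then show False using assms sr[OF u10] A z by auto
    next
      case False
      then show False using assms sr[OF False] A z uu by auto
    qed
  qed
  show "B \<noteq> 0"
  proof
    assume B: "B = 0"
    then show False using assms sr[OF A0] B z uu by auto
  qed
  show "A \<noteq> B"
  proof
    assume "A = B"
    then show False using assms sr[OF A0 uu[of A]] uu[of A] by simp
  qed
qed

lemma cross_zero_cases:
  fixes A B :: "real \<times> real"
  assumes A0: "A \<noteq> 0" and B0: "B \<noteq> 0" and cr: "fst A * snd B - snd A * fst B = 0"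
  shows "same_ray A B \<or> 0 \<in> open_segment A B"
proof -
  obtain a1 a2 where A: "A = (a1, a2)" by (cases A)
  obtain b1 b2 where B: "B = (b1, b2)" by (cases B)
  have nA: "a1^2 + a2^2 > 0" using A0 A by (simp add: sum_power2_gt_zero_iff zero_prod_def)
  have nz: "a1 \<noteq> 0 \<or> a2 \<noteq> 0" using nA by (simp add: sum_power2_gt_zero_iff)
  define k where "k = (a1 * b1 + a2 * b2) / (a1^2 + a2^2)"
  have c: "a1 * b2 = a2 * b1" using cr A B by simp
  have b1: "b1 = k * a1"
  proof -
    have "b1 * (a1^2 + a2^2) = (a1 * b1 + a2 * b2) * a1" using c by algebra
    then have "b1 = (a1 * b1 + a2 * b2) * a1 / (a1^2 + a2^2)" using nA nz by (simp add: eq_divide_eq)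
    then show ?thesis unfolding k_def by simp
  qed
  have b2: "b2 = k * a2"
  proof -
    have "b2 * (a1^2 + a2^2) = (a1 * b1 + a2 * b2) * a2" using c by algebra
    then have "b2 = (a1 * b1 + a2 * b2) * a2 / (a1^2 + a2^2)" using nA nz by (simp add: eq_divide_eq)
    then show ?thesis unfolding k_def by simp
  qed
  have Bk: "B = k *\<^sub>R A" using A B b1 b2 by simp
  have k0: "k \<noteq> 0" using B0 Bk by auto
  show ?thesis
  proof (cases "k > 0")
    case True
    have "A \<in> ray A" unfolding ray_def by (auto intro!: exI[of _ 1])
    moreover have "B \<in> ray A" unfolding ray_def using Bk True by (auto intro!: exI[of _ k])
    ultimately show ?thesis using A0 unfolding same_ray_def by blast
  next
    case False
    then have kn: "k < 0" using k0 by simp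
    define u where "u = 1 / (1 - k)"
    have u: "0 < u" "u < 1" unfolding u_def using kn by (auto simp: field_simps)
    have "(1 - u) *\<^sub>R A + u *\<^sub>R B = ((1 - u) + u * k) *\<^sub>R A" unfolding Bk by (simp add: algebra_simps)
    also have "(1 - u) + u * k = 0" unfolding u_def using kn by (simp add: field_simps)
    finally have "0 = (1 - u) *\<^sub>R A + u *\<^sub>R B" by simp
    moreover have "A \<noteq> B"
    proof
      assume "A = B"
      then have "(1 - k) *\<^sub>R A = 0" using Bk by (simp add: algebra_simps)
      then show False using kn A0 by simp
    qed
    ultimately show ?thesis using u unfolding in_segment by blast
  qed
qed

lemma seg_zero:
  fixes A B :: "real \<times> real"
  assumes "0 \<in> open_segment A B"
  shows "\<exists>k>0. B = (- k) *\<^sub>R A"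
proof -
  obtain u where u: "0 < u" "u < 1" "0 = (1 - u) *\<^sub>R A + u *\<^sub>R B"
    using assms unfolding in_segment by blast
  have "u *\<^sub>R B + (1 - u) *\<^sub>R A = 0" using u(3) by (simp add: add.commute)
  then have uB: "u *\<^sub>R B = - ((1 - u) *\<^sub>R A)" by (simp add: eq_neg_iff_add_eq_0)
  have "B = (1/u) *\<^sub>R (u *\<^sub>R B)" using u(1) by simp
  also have "\<dots> = (- ((1 - u) / u)) *\<^sub>R A" unfolding uB by simp
  finally have "B = (- ((1 - u) / u)) *\<^sub>R A" .
  moreover have "(1 - u) / u > 0" using u by simp
  ultimately show ?thesis by blast
qed



lemma line_part:
  assumes hyp: "\<not> same_ray A B"
  shows "\<exists>P V. V \<noteq> 0 \<and>
            branch_params ` {K \<in> IrrBranches. A \<in> K \<and> B \<in> K} = Hspace \<inter> line3 P V \<and>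
            (0 \<notin> open_segment A B \<longrightarrow> line3 P V \<inter> Hboundary \<noteq> {}) \<and>
            (0 \<in> open_segment A B \<longrightarrow>
               line3 P V \<subseteq> Hspace \<and>
               (\<forall>X \<in> line3 P V. \<forall>Y \<in> line3 P V. gamma_coord X = gamma_coord Y))"
proof -
  note nz = nsr[OF hyp]
  obtain a1 a2 where A: "A = (a1, a2)" by (cases A)
  obtain b1 b2 where B: "B = (b1, b2)" by (cases B)
  define V where "V = (a2 - b2, b1 - a1, a1 * b2 - a2 * b1)"
  have ne: "(a1, a2) \<noteq> (b1, b2)" using nz(3) A B by simp
  obtain P0 where L: "{P. (a1, a2, 1::real) \<bullet> P = norm A \<and> (b1, b2, 1::real) \<bullet> P = norm B} = line3 P0 V"
    using two_planes[OF ne] unfolding V_def by blast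
  have V0: "V \<noteq> 0" using ne unfolding V_def by (auto simp: zero_prod_def)
  have img: "branch_params ` {K \<in> IrrBranches. A \<in> K \<and> B \<in> K} = Hspace \<inter> line3 P0 V"
    unfolding image_cond L[symmetric] mem_unif A B by auto
  have gam: "gamma_coord (P0 + t *\<^sub>R V) = snd (snd P0) + t * (a1 * b2 - a2 * b1)" for t
    unfolding gamma_coord_def V_def by simp
  have part1: "line3 P0 V \<inter> Hboundary \<noteq> {}" if "0 \<notin> open_segment A B"
  proof -
    have cr: "a1 * b2 - a2 * b1 \<noteq> 0"
      using cross_zero_cases[OF nz(1,2)] hyp that A B by auto
    define t where "t = - snd (snd P0) / (a1 * b2 - a2 * b1)"
    have "gamma_coord (P0 + t *\<^sub>R V) = 0" unfolding gam t_def using cr by simp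
    then have "P0 + t *\<^sub>R V \<in> Hboundary" unfolding gamma_coord_def Hboundary_def
      by (cases "P0 + t *\<^sub>R V") auto
    moreover have "P0 + t *\<^sub>R V \<in> line3 P0 V" unfolding line3_def by blast
    ultimately show ?thesis by blast
  qed
  have part2: "line3 P0 V \<subseteq> Hspace \<and> (\<forall>X \<in> line3 P0 V. \<forall>Y \<in> line3 P0 V. gamma_coord X = gamma_coord Y)"
    if seg: "0 \<in> open_segment A B"
  proof -
    obtain k where k: "k > 0" "B = (- k) *\<^sub>R A" using seg_zero[OF seg] by blast
    have bk: "b1 = - k * a1" "b2 = - k * a2" using k(2) A B by auto
    have cr: "a1 * b2 - a2 * b1 = 0" unfolding bk by (simp add: algebra_simps)
    have nB: "norm B = k * norm A" using k by simp
    have "X \<in> Hspace" if "X \<in> line3 P0 V" for X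
    proof -
      obtain x y z where X: "X = (x, y, z)" by (cases X) auto
      have "X \<in> {P. (a1, a2, 1::real) \<bullet> P = norm A \<and> (b1, b2, 1::real) \<bullet> P = norm B}"
        using that L by simp
      then have e1: "a1 * x + a2 * y + z = norm A" and e2: "b1 * x + b2 * y + z = k * norm A"
        unfolding X inner3 nB by auto
      have s: "a1 * x + a2 * y = norm A - z" using e1 by simp
      have "- k * (a1 * x + a2 * y) + z = k * norm A" using e2 unfolding bk by (simp add: algebra_simps)
      then have "- k * (norm A - z) + z = k * norm A" unfolding s .
      then have "z * (1 + k) = 2 * k * norm A" by (simp add: algebra_simps)
      moreover have "norm A > 0" using nz(1) by simp
      ultimately have "z * (1 + k) > 0" using k by simp
      then have "z > 0" using k by (simp add: zero_less_mult_iff)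
      then show ?thesis unfolding X Hspace_def by simp
    qed
    moreover have "gamma_coord X = gamma_coord Y" if "X \<in> line3 P0 V" "Y \<in> line3 P0 V" for X Y
      using that unfolding line3_def using gam cr by auto
    ultimately show ?thesis by blast
  qed
  show ?thesis using V0 img part1 part2 by blast
qed

theorem lemma3:
  shows "bij_betw branch_params IrrBranches Hspace
    \<and> (\<forall>K \<in> IrrBranches. unifocal (branch_params K) = K)
    \<and> (\<forall>A. A \<noteq> 0 \<longrightarrow>
         (\<exists>n d. n \<noteq> 0 \<and>
            branch_params ` {K \<in> IrrBranches. A \<in> K} = Hspace \<inter> plane3 n d \<and>
            plane3 n d \<inter> Hboundary \<noteq> {} \<and> plane3 n d \<noteq> Hboundary))
    \<and> (\<forall>A B. \<not> same_ray A B \<longrightarrow>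
         (\<exists>P V. V \<noteq> 0 \<and>
            branch_params ` {K \<in> IrrBranches. A \<in> K \<and> B \<in> K} = Hspace \<inter> line3 P V \<and>
            (0 \<notin> open_segment A B \<longrightarrow> line3 P V \<inter> Hboundary \<noteq> {}) \<and>
            (0 \<in> open_segment A B \<longrightarrow>
               line3 P V \<subseteq> Hspace \<and>
               (\<forall>X \<in> line3 P V. \<forall>Y \<in> line3 P V. gamma_coord X = gamma_coord Y))))"
  using bij_part bp_props plane_part line_part by blast

end
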